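(* Assume the setting described in the context and let $\theta\in\mathbb R^{\mathfrak d}$. Then $$\langle(\nabla V)(\theta),\mathcal G(\theta)\rangle=4L\Big[\int_{[a,b]^{\ell_0}}\big\langle\mathcal N^{L,\theta}_\infty(x)-f(x),\mathcal N^{L,\theta}_\infty(x)-f(0)\big\rangle\,\mu(dx)\Big].$$
   Context: Setting. Let $L,\mathfrak d\in\mathbb N=\{1,2,\dots\}$, $(\ell_k)_{k\in\mathbb N_0}\subseteq\mathbb N$, $a\in\mathbb R$, $b\in(a,\infty)$, $\mathscr A\in(0,\infty)$, $\mathscr B\in(\mathscr A,\infty)$ with $\mathfrak d=\sum_{k=1}^L\ell_k(\ell_{k-1}+1)$; let $\mathbf d_k=\sum_{h=1}^k\ell_h(\ell_{h-1}+1)$ for $k\in\mathbb N_0$. For $\theta=(\theta_1,\dots,\theta_{\mathfrak d})\in\mathbb R^{\mathfrak d}$, $k\in\{1,\dots,L\}$, $i\in\{1,\dots,\ell_k\}$, $j\in\{1,\dots,\ell_{k-1}\}$ let $\mathfrak w^{k,\theta}_{i,j}=\theta_{(i-1)\ell_{k-1}+j+\mathbf d_{k-1}}$ and $\mathfrak b^{k,\theta}_i=\theta_{\ell_k\ell_{k-1}+i+\mathbf d_{k-1}}$, let $\mathfrak w^{k,\theta}=(\mathfrak w^{k,\theta}_{i,j})_{i,j}\in\mathbb R^{\ell_k\times\ell_{k-1}}$, $\mathfrak b^{k,\theta}=(\mathfrak b^{k,\theta}_1,\dots,\mathfrak b^{k,\theta}_{\ell_k})\in\mathbb R^{\ell_k}$,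 and $\mathcal A^\theta_k\colon\mathbb R^{\ell_{k-1}}\to\mathbb R^{\ell_k}$, $\mathcal A^\theta_k(x)=\mathfrak b^{k,\theta}+\mathfrak w^{k,\theta}x$. Let $\mathscr R_\infty(x)=\max\{x,0\}$ and let $\mathscr R_r\colon\mathbb R\to\mathbb R$, $r\in[1,\infty)$, satisfy for all $r\in[1,\infty)$: $\mathscr R_r\in C^1(\mathbb R,\mathbb R)$, $\mathscr R_r(x)=0$ for all $x\le\mathscr A r^{-1}$, $0\le\mathscr R_r(y)\le\max\{y,0\}$ for all $y\in\mathbb R$, $\mathscr R_r(z)=z$ for all $z\ge\mathscr B r^{-1}$; assume $\sup_{r\in[1,\infty)}\sup_{x\in\mathbb R}|(\mathscr R_r)'(x)|<\infty$. $\|\cdot\|$, $\langle\cdot,\cdot\rangle$ are the Euclidean norm and scalar product on each $\mathbb R^n$; for $r\in[1,\infty]$, $\mathfrak M_r(x_1,\dots,x_n)=(\mathscr R_r(x_1),\dots,\mathscr R_r(x_n))$. For $r\in[1,\infty]$, $\theta\in\mathbb R^{\mathfrak d}$ define $\mathcal N^{k,\theta}_r\colon\mathbb R^{\ell_0}\to\mathbb R^{\ell_k}$, $k\in\{1,\dots,L\}$, by $\mathcal N^{1,\theta}_r=\mathcal A^\theta_1$ and $\mathcal N^{k+1,\theta}_r(x)=\mathcal A^\theta_{k+1}(\mathfrak M_{r^{1/k}}(\mathcal N^{k,\theta}_r(x)))$ (with $\infty^{1/k}=\infty$). Let $\mu$ be a measure on the Borel $\sigma$-algebra of $[a,b]^{\ell_0}$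 with $\mu([a,b]^{\ell_0})\in\mathbb R$, let $f=(f_1,\dots,f_{\ell_L})\colon\mathbb R^{\ell_0}\to\mathbb R^{\ell_L}$ be measurable (only its values on $[a,b]^{\ell_0}$ and the value $f(0)$ enter), and for $r\in[1,\infty]$ let $\mathcal L_r\colon\mathbb R^{\mathfrak d}\to\mathbb R$ be given by $\mathcal L_r(\theta)=\int_{[a,b]^{\ell_0}}\|\mathcal N^{L,\theta}_r(x)-f(x)\|^2\,\mu(dx)$ (these integrals are real numbers as part of the setting). Let $\mathcal G\colon\mathbb R^{\mathfrak d}\to\mathbb R^{\mathfrak d}$ satisfy $\mathcal G(\theta)=\lim_{r\to\infty}(\nabla\mathcal L_r)(\theta)$ for every $\theta$ for which $((\nabla\mathcal L_r)(\theta))_{r\in[1,\infty)}$ is convergent as $r\to\infty$. Let $V\colon\mathbb R^{\mathfrak d}\to\mathbb R$, $V(\theta)=\big[\sum_{k=1}^L\big(k\|\mathfrak b^{k,\theta}\|^2+\sum_{i=1}^{\ell_k}\sum_{j=1}^{\ell_{k-1}}|\mathfrak w^{k,\theta}_{i,j}|^2\big)\big]-2L\langle f(0),\mathfrak b^{L,\theta}\rangle$. *)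

theory Defs
  imports "HOL-Analysis.Analysis"
begin

text \<open>Parameter vectors theta in R^dd are elements of real^'d, where the coordinates
  are enumerated by a bijection idx from {1..dd} onto the finite index type 'd;
  theta_i is theta $ idx i.  Layer vectors in R^(l k) are functions nat => real,
  whose entries 1..l k are meaningful.\<close>

definition dsum :: "(nat \<Rightarrow> nat) \<Rightarrow> nat \<Rightarrow> nat" where
  "dsum l k = (\<Sum>h = 1..k. l h * (l (h - 1) + 1))"

definition wgt :: "(nat \<Rightarrow> nat) \<Rightarrow> (nat \<Rightarrow> 'd) \<Rightarrow> real^'d \<Rightarrow> nat \<Rightarrow> nat \<Rightarrow> nat \<Rightarrow> real" where
  "wgt l idx \<theta> k i j = \<theta> $ idx ((i - 1) * l (k - 1) + j + dsum l (k - 1))"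

definition bias :: "(nat \<Rightarrow> nat) \<Rightarrow> (nat \<Rightarrow> 'd) \<Rightarrow> real^'d \<Rightarrow> nat \<Rightarrow> nat \<Rightarrow> real" where
  "bias l idx \<theta> k i = \<theta> $ idx (l k * l (k - 1) + i + dsum l (k - 1))"

definition affine :: "(nat \<Rightarrow> nat) \<Rightarrow> (nat \<Rightarrow> 'd) \<Rightarrow> real^'d \<Rightarrow> nat \<Rightarrow> (nat \<Rightarrow> real) \<Rightarrow> (nat \<Rightarrow> real)" where
  "affine l idx \<theta> k y = (\<lambda>i. if i \<in> {1..l k}
      then bias l idx \<theta> k i + (\<Sum>j = 1..l (k - 1). wgt l idx \<theta> k i j * y j) else 0)"

fun net :: "(nat \<Rightarrow> nat) \<Rightarrow> (nat \<Rightarrow> 'd) \<Rightarrow> real^'d \<Rightarrow> (nat \<Rightarrow> real \<Rightarrow> real) \<Rightarrow> nat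
    \<Rightarrow> (nat \<Rightarrow> real) \<Rightarrow> (nat \<Rightarrow> real)" where
  "net l idx \<theta> act 0 x = (\<lambda>_. 0)"
| "net l idx \<theta> act (Suc 0) x = affine l idx \<theta> 1 x"
| "net l idx \<theta> act (Suc (Suc k)) x =
     affine l idx \<theta> (Suc (Suc k)) (\<lambda>i. act (Suc k) (net l idx \<theta> act (Suc k) x i))"

definition act_fin :: "(real \<Rightarrow> real \<Rightarrow> real) \<Rightarrow> real \<Rightarrow> nat \<Rightarrow> real \<Rightarrow> real" where
  "act_fin R r k = R (r powr (1 / real k))"

definition relu :: "real \<Rightarrow> real" where
  "relu x = max x 0"

definition act_inf :: "nat \<Rightarrow> real \<Rightarrow> real" where
  "act_inf k = relu"

definition risk :: "(nat \<Rightarrow> nat) \<Rightarrow> (nat \<Rightarrow> 'd) \<Rightarrow> nat \<Rightarrow> (nat \<Rightarrow> real \<Rightarrow> real)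
    \<Rightarrow> (nat \<Rightarrow> real) measure \<Rightarrow> ((nat \<Rightarrow> real) \<Rightarrow> (nat \<Rightarrow> real)) \<Rightarrow> real^'d \<Rightarrow> real" where
  "risk l idx L act \<mu> f \<theta> =
     (\<integral>x. (\<Sum>i = 1..l L. (net l idx \<theta> act L x i - f x i)\<^sup>2) \<partial>\<mu>)"

definition lyap :: "(nat \<Rightarrow> nat) \<Rightarrow> (nat \<Rightarrow> 'd) \<Rightarrow> nat \<Rightarrow> ((nat \<Rightarrow> real) \<Rightarrow> (nat \<Rightarrow> real))
    \<Rightarrow> real^'d \<Rightarrow> real" where
  "lyap l idx L f \<theta> =
     (\<Sum>k = 1..L. real k * (\<Sum>i = 1..l k. (bias l idx \<theta> k i)\<^sup>2)
        + (\<Sum>i = 1..l k. \<Sum>j = 1..l (k - 1). (wgt l idx \<theta> k i j)\<^sup>2))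
     - 2 * real L * (\<Sum>i = 1..l L. f (\<lambda>_. 0) i * bias l idx \<theta> L i)"

definition grad :: "('a::real_inner \<Rightarrow> real) \<Rightarrow> 'a \<Rightarrow> 'a" where
  "grad F \<theta> = (THE D. GDERIV F \<theta> :> D)"

end

theory Submission
  imports Defs
begin

lemma grad_eq:
  fixes F :: "'a::euclidean_space \<Rightarrow> real"
  assumes d: "(F has_derivative \<Phi>) (at \<theta>)"
  shows "grad F \<theta> = (\<Sum>b\<in>Basis. \<Phi> b *\<^sub>R b)"
proof -
  have bl: "bounded_linear \<Phi>" using d has_derivative_bounded_linear by blast
  then have lin: "linear \<Phi>" using bounded_linear.linear by blast
  define S where "S = (\<Sum>b\<in>Basis. \<Phi> b *\<^sub>R b)"
  have eq: "\<Phi> h = h \<bullet> S" for h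
  proof -
    have "h \<bullet> S = (\<Sum>b\<in>Basis. (h \<bullet> b) * \<Phi> b)"
      unfolding S_def by (simp add: inner_sum_right mult.commute)
    also have "\<dots> = \<Phi> (\<Sum>b\<in>Basis. (h \<bullet> b) *\<^sub>R b)"
      by (simp add: linear_sum[OF lin] linear_scale[OF lin])
    also have "\<dots> = \<Phi> h" by (simp add: euclidean_representation)
    finally show ?thesis by simp
  qed
  have "\<Phi> = (\<lambda>h. h \<bullet> S)" using eq by (intro ext)
  then have D: "GDERIV F \<theta> :> S" unfolding gderiv_def using d by simp
  show ?thesis unfolding grad_def S_def[symmetric]
  proof (rule the_equality)
    show "GDERIV F \<theta> :> S" by (rule D)
    fix D' assume "GDERIV F \<theta> :> D'"
    then have "(\<lambda>h. h \<bullet> D') = (\<lambda>h. h \<bullet> S)"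
      using D unfolding gderiv_def by (rule has_derivative_unique)
    from fun_cong[OF this, of "D' - S"]
    have "(D' - S) \<bullet> (D' - S) = 0" by (simp add: inner_diff_right)
    then show "D' = S" by simp
  qed
qed

lemma deriv_integral:
  fixes g :: "'a::euclidean_space \<Rightarrow> 'b \<Rightarrow> real" and Dg :: "'a \<Rightarrow> 'b \<Rightarrow> 'a \<Rightarrow> real"
  assumes \<delta>: "\<delta> > 0"
    and der: "\<And>\<xi> x. \<xi> \<in> ball \<theta> \<delta> \<Longrightarrow> x \<in> space M \<Longrightarrow> ((\<lambda>\<eta>. g \<eta> x) has_derivative Dg \<xi> x) (at \<xi>)"
    and bnd: "\<And>\<xi> x h. \<xi> \<in> ball \<theta> \<delta> \<Longrightarrow> x \<in> space M \<Longrightarrow> \<bar>Dg \<xi> x h\<bar> \<le> Bd x * norm h"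
    and intB: "integrable M Bd"
    and intg: "\<And>\<xi>. \<xi> \<in> ball \<theta> \<delta> \<Longrightarrow> integrable M (g \<xi>)"
    and measD: "\<And>h. (\<lambda>x. Dg \<theta> x h) \<in> borel_measurable M"
  shows "((\<lambda>\<xi>. \<integral>x. g \<xi> x \<partial>M) has_derivative (\<lambda>h. \<integral>x. Dg \<theta> x h \<partial>M)) (at \<theta>)"
proof -
  have th: "\<theta> \<in> ball \<theta> \<delta>" using \<delta> by simp
  have blx: "bounded_linear (Dg \<theta> x)" if "x \<in> space M" for x
    using der[OF th that] has_derivative_bounded_linear by blast
  have intD: "integrable M (\<lambda>x. Dg \<theta> x h)" for h
  proof (rule Bochner_Integration.integrable_bound[of _ "\<lambda>x. Bd x * norm h"])
    show "integrable M (\<lambda>x. Bd x * norm h)" using intB by simp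
    show "AE x in M. norm (Dg \<theta> x h) \<le> norm (Bd x * norm h)"
      using bnd[OF th] by (auto intro!: AE_I2 order.trans[OF _ abs_ge_self])
  qed (rule measD)
  have BL: "bounded_linear (\<lambda>h. \<integral>x. Dg \<theta> x h \<partial>M)"
  proof (rule bounded_linear_intro[where K="\<integral>x. Bd x \<partial>M"])
    fix h1 h2
    have "(\<integral>x. Dg \<theta> x (h1 + h2) \<partial>M) = (\<integral>x. Dg \<theta> x h1 + Dg \<theta> x h2 \<partial>M)"
      by (rule Bochner_Integration.integral_cong) (auto simp: linear_add[OF bounded_linear.linear[OF blx]])
    then show "(\<integral>x. Dg \<theta> x (h1 + h2) \<partial>M) = (\<integral>x. Dg \<theta> x h1 \<partial>M) + (\<integral>x. Dg \<theta> x h2 \<partial>M)"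
      using intD by simp
  next
    fix r h
    have "(\<integral>x. Dg \<theta> x (r *\<^sub>R h) \<partial>M) = (\<integral>x. r * Dg \<theta> x h \<partial>M)"
      by (rule Bochner_Integration.integral_cong) (auto simp: linear_scale[OF bounded_linear.linear[OF blx]])
    then show "(\<integral>x. Dg \<theta> x (r *\<^sub>R h) \<partial>M) = r *\<^sub>R (\<integral>x. Dg \<theta> x h \<partial>M)" by simp
  next
    fix h
    have "norm (\<integral>x. Dg \<theta> x h \<partial>M) \<le> (\<integral>x. Bd x * norm h \<partial>M)"
    proof (rule order.trans[OF integral_norm_bound integral_mono])
      show "integrable M (\<lambda>x. norm (Dg \<theta> x h))" using intD by simp
      show "integrable M (\<lambda>x. Bd x * norm h)" using intB by simp
    qed (use bnd[OF th] in auto)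
    then show "norm (\<integral>x. Dg \<theta> x h \<partial>M) \<le> norm h * (\<integral>x. Bd x \<partial>M)" by (simp add: mult.commute)
  qed
  have mvt: "\<bar>g \<eta> x - g \<theta> x\<bar> \<le> Bd x * norm (\<eta> - \<theta>)" if "\<eta> \<in> ball \<theta> \<delta>" "x \<in> space M" for \<eta> x
  proof -
    have "norm (g \<eta> x - g \<theta> x) \<le> Bd x * norm (\<eta> - \<theta>)"
    proof (rule differentiable_bound[where S="ball \<theta> \<delta>" and f="\<lambda>\<eta>. g \<eta> x" and f'="\<lambda>\<xi>. Dg \<xi> x"])
      show "convex (ball \<theta> \<delta>)" by simp
      show "((\<lambda>\<eta>. g \<eta> x) has_derivative Dg \<xi> x) (at \<xi> within ball \<theta> \<delta>)" if "\<xi> \<in> ball \<theta> \<delta>" for \<xi>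
        using der[OF that \<open>x \<in> space M\<close>] by (rule has_derivative_at_withinI)
      show "onorm (Dg \<xi> x) \<le> Bd x" if "\<xi> \<in> ball \<theta> \<delta>" for \<xi>
        by (rule onorm_le) (use bnd[OF that \<open>x \<in> space M\<close>] in auto)
    qed (use that th in auto)
    then show ?thesis by simp
  qed
  show ?thesis unfolding has_derivative_at
  proof (intro conjI BL)
    show "((\<lambda>h. norm ((\<integral>x. g (\<theta> + h) x \<partial>M) - (\<integral>x. g \<theta> x \<partial>M) - (\<integral>x. Dg \<theta> x h \<partial>M)) / norm h) \<longlongrightarrow> 0) (at 0)"
      unfolding tendsto_at_iff_sequentially comp_def
    proof (intro allI impI)
      fix X :: "nat \<Rightarrow> 'a" assume X0: "\<forall>i. X i \<in> UNIV - {0}" and X: "X \<longlonglongrightarrow> 0"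
      define q where "q n x = (g (\<theta> + X n) x - g \<theta> x - Dg \<theta> x (X n)) / norm (X n)" for n x
      define q' where "q' n x = (if norm (X n) < \<delta> then q n x else 0)" for n x
      have ev: "eventually (\<lambda>n. norm (X n) < \<delta>) sequentially"
        using X \<delta> by (metis order_tendstoD(2) tendsto_norm_zero norm_zero)
      have lim: "(\<lambda>n. \<integral>x. q' n x \<partial>M) \<longlonglongrightarrow> (\<integral>x. 0 \<partial>M)"
      proof (rule integral_dominated_convergence[where w="\<lambda>x. 2 * Bd x"])
        show "(\<lambda>x. 0::real) \<in> borel_measurable M" by simp
        show "q' n \<in> borel_measurable M" for n
        proof (cases "norm (X n) < \<delta>")
          case True
          then have "\<theta> + X n \<in> ball \<theta> \<delta>" by (simp add: dist_norm)
          then have "g (\<theta> + X n) \<in> borel_measurable M" "g \<theta> \<in> borel_measurable M"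
            using intg th by auto
          then show ?thesis using True measD unfolding q'_def q_def by measurable
        next
          case False
          then have "q' n = (\<lambda>x. 0)" unfolding q'_def by auto
          then show ?thesis by simp
        qed
        show "integrable M (\<lambda>x. 2 * Bd x)" using intB by simp
        show "AE x in M. (\<lambda>n. q' n x) \<longlonglongrightarrow> 0"
        proof (rule AE_I2)
          fix x assume x: "x \<in> space M"
          have L0: "((\<lambda>h. norm (g (\<theta> + h) x - g \<theta> x - Dg \<theta> x h) / norm h) \<longlongrightarrow> 0) (at 0)"
            using der[OF th x] unfolding has_derivative_at by blast
          have "((\<lambda>h. norm (g (\<theta> + h) x - g \<theta> x - Dg \<theta> x h) / norm h) \<circ> X) \<longlonglongrightarrow> 0"
            by (rule L0[unfolded tendsto_at_iff_sequentially, rule_format, OF X0[rule_format] X])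
          then have "(\<lambda>n. norm (g (\<theta> + X n) x - g \<theta> x - Dg \<theta> x (X n)) / norm (X n)) \<longlonglongrightarrow> 0"
            by (simp only: comp_def)
          then have "(\<lambda>n. \<bar>q n x\<bar>) \<longlonglongrightarrow> 0" unfolding q_def by simp
          then have "(\<lambda>n. q n x) \<longlonglongrightarrow> 0" by (simp add: tendsto_rabs_zero_iff)
          moreover have "eventually (\<lambda>n. q n x = q' n x) sequentially"
            using ev by eventually_elim (simp add: q'_def)
          ultimately show "(\<lambda>n. q' n x) \<longlonglongrightarrow> 0" by (rule Lim_transform_eventually)
        qed
        show "AE x in M. norm (q' n x) \<le> 2 * Bd x" for n
        proof (rule AE_I2)
          fix x assume x: "x \<in> space M"
          have B0: "0 \<le> Bd x"
          proof -
            have "0 \<le> Bd x * norm (X 0)" using bnd[OF th x, of "X 0"] abs_ge_zero[of "Dg \<theta> x (X 0)"] by linarith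
            moreover have "norm (X 0) > 0" using X0 by auto
            ultimately show ?thesis by (simp add: zero_le_mult_iff)
          qed
          show "norm (q' n x) \<le> 2 * Bd x"
          proof (cases "norm (X n) < \<delta>")
            case True
            then have inb: "\<theta> + X n \<in> ball \<theta> \<delta>" by (simp add: dist_norm)
            have pos: "norm (X n) > 0" using X0 by auto
            have "\<bar>g (\<theta> + X n) x - g \<theta> x - Dg \<theta> x (X n)\<bar> \<le> \<bar>g (\<theta> + X n) x - g \<theta> x\<bar> + \<bar>Dg \<theta> x (X n)\<bar>"
              by linarith
            also have "\<dots> \<le> Bd x * norm (X n) + Bd x * norm (X n)"
              using mvt[OF inb x] bnd[OF th x, of "X n"] by simp
            finally have "\<bar>g (\<theta> + X n) x - g \<theta> x - Dg \<theta> x (X n)\<bar> \<le> (2 * Bd x) * norm (X n)" by simp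
            then show ?thesis using True pos unfolding q'_def q_def
              by (simp add: divide_le_eq abs_divide)
          qed (simp add: q'_def B0)
        qed
      qed
      then have lim': "(\<lambda>n. \<bar>\<integral>x. q' n x \<partial>M\<bar>) \<longlonglongrightarrow> 0" using tendsto_rabs[OF lim] by simp
      have "eventually (\<lambda>n. \<bar>\<integral>x. q' n x \<partial>M\<bar> = norm ((\<integral>x. g (\<theta> + X n) x \<partial>M) - (\<integral>x. g \<theta> x \<partial>M) - (\<integral>x. Dg \<theta> x (X n) \<partial>M)) / norm (X n)) sequentially"
        using ev
      proof eventually_elim
        case (elim n)
        then have inb: "\<theta> + X n \<in> ball \<theta> \<delta>" by (simp add: dist_norm)
        have "(\<integral>x. q' n x \<partial>M) = (\<integral>x. q n x \<partial>M)"
          using elim by (simp add: q'_def)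
        also have "\<dots> = (\<integral>x. g (\<theta> + X n) x - g \<theta> x - Dg \<theta> x (X n) \<partial>M) / norm (X n)"
          unfolding q_def by simp
        also have "\<dots> = ((\<integral>x. g (\<theta> + X n) x \<partial>M) - (\<integral>x. g \<theta> x \<partial>M) - (\<integral>x. Dg \<theta> x (X n) \<partial>M)) / norm (X n)"
          using intg[OF inb] intg[OF th] intD by simp
        finally show ?case by (simp add: abs_divide)
      qed
      with lim' show "(\<lambda>n. norm ((\<integral>x. g (\<theta> + X n) x \<partial>M) - (\<integral>x. g \<theta> x \<partial>M) - (\<integral>x. Dg \<theta> x (X n) \<partial>M)) / norm (X n)) \<longlonglongrightarrow> 0"
        by (rule Lim_transform_eventually)
    qed
  qed
qed

definition aff :: "(nat \<Rightarrow> nat) \<Rightarrow> (nat \<Rightarrow> nat \<Rightarrow> real) \<Rightarrow> (nat \<Rightarrow> nat \<Rightarrow> nat \<Rightarrow> real) \<Rightarrow> nat \<Rightarrow> (nat \<Rightarrow> real) \<Rightarrow> nat \<Rightarrow> real" where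
  "aff l B W k y = (\<lambda>i. if i \<in> {1..l k} then B k i + (\<Sum>j = 1..l (k - 1). W k i j * y j) else 0)"

lemma affine_aff: "affine l idx \<theta> k y = aff l (bias l idx \<theta>) (wgt l idx \<theta>) k y"
  unfolding affine_def aff_def by simp

fun tg :: "(nat \<Rightarrow> nat) \<Rightarrow> (nat \<Rightarrow> nat \<Rightarrow> nat \<Rightarrow> real) \<Rightarrow> (nat \<Rightarrow> nat \<Rightarrow> real) \<Rightarrow> (nat \<Rightarrow> real \<Rightarrow> real)
   \<Rightarrow> (nat \<Rightarrow> real \<Rightarrow> real) \<Rightarrow> (nat \<Rightarrow> real) \<Rightarrow> (nat \<Rightarrow> nat \<Rightarrow> real) \<Rightarrow> (nat \<Rightarrow> nat \<Rightarrow> nat \<Rightarrow> real)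
   \<Rightarrow> nat \<Rightarrow> nat \<Rightarrow> real" where
  "tg l W Nv act dact x Bh Wh 0 = (\<lambda>_. 0)"
| "tg l W Nv act dact x Bh Wh (Suc 0) = aff l Bh Wh 1 x"
| "tg l W Nv act dact x Bh Wh (Suc (Suc k)) = (\<lambda>i. if i \<in> {1..l (Suc (Suc k))} then
      Bh (Suc (Suc k)) i + (\<Sum>j = 1..l (Suc k). Wh (Suc (Suc k)) i j * act (Suc k) (Nv (Suc k) j))
      + (\<Sum>j = 1..l (Suc k). W (Suc (Suc k)) i j * (dact (Suc k) (Nv (Suc k) j) * tg l W Nv act dact x Bh Wh (Suc k) j))
      else 0)"

definition dinf :: "nat \<Rightarrow> real \<Rightarrow> real" where
  "dinf k y = (if y > 0 then 1 else 0)"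

lemma aff_lin:
  "aff l (\<lambda>k i. \<alpha> * B1 k i + \<beta> * B2 k i) (\<lambda>k i j. \<alpha> * W1 k i j + \<beta> * W2 k i j) k y i
   = \<alpha> * aff l B1 W1 k y i + \<beta> * aff l B2 W2 k y i"
  unfolding aff_def by (simp add: algebra_simps sum.distrib sum_distrib_left)

lemma tg_lin:
  "tg l W Nv act dact x (\<lambda>k i. \<alpha> * B1 k i + \<beta> * B2 k i) (\<lambda>k i j. \<alpha> * W1 k i j + \<beta> * W2 k i j) k i
   = \<alpha> * tg l W Nv act dact x B1 W1 k i + \<beta> * tg l W Nv act dact x B2 W2 k i"
proof (induction k arbitrary: i rule: nat_less_induct)
  case (1 k)
  show ?case
  proof (cases k)
    case 0 then show ?thesis by simp
  next
    case (Suc k')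
    show ?thesis
    proof (cases k')
      case 0 then show ?thesis using Suc by (simp add: aff_lin)
    next
      case (Suc k'')
      have IH: "\<And>j. tg l W Nv act dact x (\<lambda>k i. \<alpha> * B1 k i + \<beta> * B2 k i) (\<lambda>k i j. \<alpha> * W1 k i j + \<beta> * W2 k i j) (Suc k'') j
          = \<alpha> * tg l W Nv act dact x B1 W1 (Suc k'') j + \<beta> * tg l W Nv act dact x B2 W2 (Suc k'') j"
        using "1" \<open>k = Suc k'\<close> Suc by simp
      show ?thesis using \<open>k = Suc k'\<close> Suc
        by (simp add: IH algebra_simps sum.distrib sum_distrib_left)
    qed
  qed
qed

lemma aff_cong:
  assumes "\<forall>i\<in>{1..l k}. B k i = B' k i \<and> (\<forall>j\<in>{1..l (k - 1)}. W k i j = W' k i j)"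
  shows "aff l B W k y = aff l B' W' k y"
  unfolding aff_def using assms by (auto intro!: sum.cong)

lemma tg_cong:
  assumes "\<forall>k'\<in>{1..k}. \<forall>i\<in>{1..l k'}. B k' i = B' k' i \<and> (\<forall>j\<in>{1..l (k' - 1)}. W k' i j = W' k' i j)"
  shows "tg l Wt Nv act dact x B W k = tg l Wt Nv act dact x B' W' k"
  using assms
proof (induction k rule: nat_less_induct)
  case (1 k)
  show ?case
  proof (cases k)
    case 0 then show ?thesis by simp
  next
    case (Suc k')
    show ?thesis
    proof (cases k')
      case 0 then show ?thesis using Suc "1.prems" by (simp add: aff_cong)
    next
      case (Suc k'')
      have IH: "tg l Wt Nv act dact x B W (Suc k'') = tg l Wt Nv act dact x B' W' (Suc k'')"
        using "1" \<open>k = Suc k'\<close> Suc by simp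
      have h: "\<forall>i\<in>{1..l k}. B k i = B' k i \<and> (\<forall>j\<in>{1..l (k - 1)}. W k i j = W' k i j)"
        using "1.prems" \<open>k = Suc k'\<close> by simp
      show ?thesis using \<open>k = Suc k'\<close> Suc h
        by (auto simp: IH intro!: sum.cong)
    qed
  qed
qed

lemma relu_dinf: "dinf k y * (c * y) = c * relu y"
  unfolding dinf_def relu_def by auto

lemma tg_euler:
  "tg l (wgt l idx \<theta>) (\<lambda>k. net l idx \<theta> act_inf k x) act_inf dinf x (\<lambda>k i. real k * bias l idx \<theta> k i) (wgt l idx \<theta>) (Suc k) i
   = real (Suc k) * net l idx \<theta> act_inf (Suc k) x i"
proof (induction k arbitrary: i)
  case 0
  then show ?case by (simp add: affine_aff aff_def)
next
  case (Suc k)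
  let ?T = "tg l (wgt l idx \<theta>) (\<lambda>k. net l idx \<theta> act_inf k x) act_inf dinf x (\<lambda>k i. real k * bias l idx \<theta> k i) (wgt l idx \<theta>)"
  let ?S = "\<Sum>j = 1..l (Suc k). wgt l idx \<theta> (Suc (Suc k)) i j * relu (net l idx \<theta> act_inf (Suc k) x j)"
  have S: "(\<Sum>j = 1..l (Suc k). wgt l idx \<theta> (Suc (Suc k)) i j * (dinf (Suc k) (net l idx \<theta> act_inf (Suc k) x j) *
          ?T (Suc k) j)) = real (Suc k) * ?S"
  proof -
    have trm: "\<And>W N c. W * (dinf (Suc k) N * (c * N)) = c * (W * relu N)"
      by (simp add: dinf_def relu_def)
    show ?thesis by (simp only: Suc.IH trm sum_distrib_left)
  qed
  show ?case
  proof (cases "i \<in> {1..l (Suc (Suc k))}")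
    case True
    have "?T (Suc (Suc k)) i = real (Suc (Suc k)) * bias l idx \<theta> (Suc (Suc k)) i + ?S + real (Suc k) * ?S"
      using True by (simp only: tg.simps if_P[OF True] S act_inf_def if_True)
    moreover have "net l idx \<theta> act_inf (Suc (Suc k)) x i = bias l idx \<theta> (Suc (Suc k)) i + ?S"
      using True by (simp add: affine_def act_inf_def)
    ultimately show ?thesis by (simp add: algebra_simps)
  next
    case False
    then show ?thesis by (simp add: affine_def del: atLeastAtMost_iff)
  qed
qed

lemma tg_ef:
  "Suc k \<le> L \<Longrightarrow> tg l Wt Nv act dact x (\<lambda>k i. if k = L then c i else 0) (\<lambda>k i j. 0) (Suc k) i
   = (if Suc k = L \<and> i \<in> {1..l L} then c i else 0)"
proof (induction k arbitrary: i)
  case 0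
  then show ?case by (auto simp: aff_def)
next
  case (Suc k)
  then show ?case by auto
qed

lemma sum_basis_inner:
  fixes \<Phi> :: "'a::euclidean_space \<Rightarrow> real"
  assumes lin: "linear \<Phi>"
  shows "(\<Sum>b\<in>Basis. \<Phi> b *\<^sub>R b) \<bullet> u = \<Phi> u"
proof -
  have "(\<Sum>b\<in>Basis. \<Phi> b *\<^sub>R b) \<bullet> u = (\<Sum>b\<in>Basis. (u \<bullet> b) * \<Phi> b)"
  proof -
    have "(\<Sum>b\<in>Basis. \<Phi> b *\<^sub>R b) \<bullet> u = (\<Sum>b\<in>Basis. \<Phi> b * (b \<bullet> u))"
      by (simp add: inner_sum_left)
    also have "\<dots> = (\<Sum>b\<in>Basis. (u \<bullet> b) * \<Phi> b)"
      by (intro sum.cong refl) (simp add: inner_commute)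
    finally show ?thesis .
  qed
  also have "\<dots> = \<Phi> (\<Sum>b\<in>Basis. (u \<bullet> b) *\<^sub>R b)"
    by (simp add: linear_sum[OF lin] linear_scale[OF lin])
  also have "\<dots> = \<Phi> u" by (simp add: euclidean_representation)
  finally show ?thesis .
qed

lemma grad_inner:
  fixes F :: "'a::euclidean_space \<Rightarrow> real"
  assumes d: "(F has_derivative \<Phi>) (at \<theta>)"
  shows "grad F \<theta> \<bullet> u = \<Phi> u"
  using grad_eq[OF d] sum_basis_inner[of \<Phi> u] d
  by (simp add: has_derivative_bounded_linear bounded_linear.linear)

definition wpos :: "(nat \<Rightarrow> nat) \<Rightarrow> nat \<Rightarrow> nat \<Rightarrow> nat \<Rightarrow> nat" where
  "wpos l k i j = (i - 1) * l (k - 1) + j + dsum l (k - 1)"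
definition bpos :: "(nat \<Rightarrow> nat) \<Rightarrow> nat \<Rightarrow> nat \<Rightarrow> nat" where
  "bpos l k i = l k * l (k - 1) + i + dsum l (k - 1)"

lemma wgt_pos: "wgt l idx \<theta> k i j = \<theta> $ idx (wpos l k i j)"
  unfolding wgt_def wpos_def by simp
lemma bias_pos: "bias l idx \<theta> k i = \<theta> $ idx (bpos l k i)"
  unfolding bias_def bpos_def by simp

lemma dsum_Suc: "dsum l (Suc k) = dsum l k + l (Suc k) * (l k + 1)"
  unfolding dsum_def by simp

lemma dsum_mono: "k \<le> k' \<Longrightarrow> dsum l k \<le> dsum l k'"
  unfolding dsum_def by (rule sum_mono2) auto

lemma wpos_range:
  assumes "1 \<le> k" "i \<in> {1..l k}" "j \<in> {1..l (k - 1)}"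
  shows "dsum l (k - 1) < wpos l k i j \<and> wpos l k i j \<le> dsum l (k - 1) + l k * l (k - 1)"
proof -
  have a1: "(i - 1) * l (k - 1) \<le> (l k - 1) * l (k - 1)" using assms by (intro mult_le_mono1) auto
  have a2: "(l k - 1) * l (k - 1) + l (k - 1) = l k * l (k - 1)" using assms
    by (cases "l k") (auto simp: algebra_simps)
  have a3: "j \<le> l (k - 1)" "1 \<le> j" using assms by auto
  have "(i - 1) * l (k - 1) + j \<le> l k * l (k - 1)" using a1 a2 a3 by linarith
  then show ?thesis using a3 unfolding wpos_def by linarith
qed

lemma bpos_range:
  assumes "1 \<le> k" "i \<in> {1..l k}"
  shows "dsum l (k - 1) + l k * l (k - 1) < bpos l k i \<and> bpos l k i \<le> dsum l k"
proof -
  have "dsum l k = dsum l (k - 1) + l k * (l (k - 1) + 1)"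
    using assms dsum_Suc[of l "k - 1"] by simp
  then show ?thesis using assms unfolding bpos_def by (auto simp: algebra_simps)
qed

lemma layer_unique:
  assumes "1 \<le> k" "1 \<le> k'" "dsum l (k - 1) < p" "p \<le> dsum l k" "dsum l (k' - 1) < p" "p \<le> dsum l k'"
  shows "k = k'"
proof (rule ccontr)
  assume "k \<noteq> k'"
  then consider "k < k'" | "k' < k" by linarith
  then show False
  proof cases
    case 1
    then have "dsum l k \<le> dsum l (k' - 1)" by (intro dsum_mono) simp
    then show False using assms by simp
  next
    case 2
    then have "dsum l k' \<le> dsum l (k - 1)" by (intro dsum_mono) simp
    then show False using assms by simp
  qed
qed

lemma block_inj:
  fixes i i' j j' m :: nat
  assumes "1 \<le> i" "1 \<le> i'" "j \<in> {1..m}" "j' \<in> {1..m}" "(i - 1) * m + j = (i' - 1) * m + j'"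
  shows "i = i' \<and> j = j'"
proof -
  have "i = i'"
  proof (rule ccontr)
    assume "i \<noteq> i'"
    then consider "i < i'" | "i' < i" by linarith
    then show False
    proof cases
      case 1
      then have "((i - 1) + 1) * m \<le> (i' - 1) * m"
        using assms by (intro mult_le_mono1) linarith
      then have "(i - 1) * m + m \<le> (i' - 1) * m" by (simp add: add_mult_distrib)
      then show False using assms by auto
    next
      case 2
      then have "((i' - 1) + 1) * m \<le> (i - 1) * m"
        using assms by (intro mult_le_mono1) linarith
      then have "(i' - 1) * m + m \<le> (i - 1) * m" by (simp add: add_mult_distrib)
      then show False using assms by auto
    qed
  qed
  then show ?thesis using assms by simp
qed

definition vb :: "(nat \<Rightarrow> nat) \<Rightarrow> nat \<Rightarrow> nat \<Rightarrow> nat \<Rightarrow> bool" where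
  "vb l L k i \<longleftrightarrow> k \<in> {1..L} \<and> i \<in> {1..l k}"
definition vw :: "(nat \<Rightarrow> nat) \<Rightarrow> nat \<Rightarrow> nat \<Rightarrow> nat \<Rightarrow> nat \<Rightarrow> bool" where
  "vw l L k i j \<longleftrightarrow> k \<in> {1..L} \<and> i \<in> {1..l k} \<and> j \<in> {1..l (k - 1)}"

lemma wpos_bpos_ne: "vw l L k i j \<Longrightarrow> vb l L k' i' \<Longrightarrow> wpos l k i j \<noteq> bpos l k' i'"
proof
  assume w: "vw l L k i j" and b: "vb l L k' i'" and eq: "wpos l k i j = bpos l k' i'"
  have rw: "dsum l (k - 1) < wpos l k i j \<and> wpos l k i j \<le> dsum l (k - 1) + l k * l (k - 1)"
    using w wpos_range[of k i l j] unfolding vw_def by auto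
  have rb: "dsum l (k' - 1) + l k' * l (k' - 1) < bpos l k' i' \<and> bpos l k' i' \<le> dsum l k'"
    using b bpos_range[of k' i' l] unfolding vb_def by auto
  have "dsum l (k - 1) + l k * l (k - 1) \<le> dsum l k" using w dsum_Suc[of l "k - 1"] unfolding vw_def by auto
  then have "k = k'" using rw rb eq w b unfolding vw_def vb_def
    by (intro layer_unique[of k k' l "wpos l k i j"]) auto
  then show False using rw rb eq by simp
qed

lemma bpos_inj: "vb l L k i \<Longrightarrow> vb l L k' i' \<Longrightarrow> bpos l k i = bpos l k' i' \<Longrightarrow> k = k' \<and> i = i'"
proof -
  assume b: "vb l L k i" and b': "vb l L k' i'" and eq: "bpos l k i = bpos l k' i'"
  have r: "dsum l (k - 1) + l k * l (k - 1) < bpos l k i \<and> bpos l k i \<le> dsum l k"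
    using b bpos_range[of k i l] unfolding vb_def by auto
  have r': "dsum l (k' - 1) + l k' * l (k' - 1) < bpos l k' i' \<and> bpos l k' i' \<le> dsum l k'"
    using b' bpos_range[of k' i' l] unfolding vb_def by auto
  have "k = k'" using r r' eq b b' unfolding vb_def
    by (intro layer_unique[of k k' l "bpos l k i"]) auto
  then show ?thesis using eq unfolding bpos_def by simp
qed

lemma wpos_inj: "vw l L k i j \<Longrightarrow> vw l L k' i' j' \<Longrightarrow> wpos l k i j = wpos l k' i' j' \<Longrightarrow> k = k' \<and> i = i' \<and> j = j'"
proof -
  assume w: "vw l L k i j" and w': "vw l L k' i' j'" and eq: "wpos l k i j = wpos l k' i' j'"
  have r: "dsum l (k - 1) < wpos l k i j \<and> wpos l k i j \<le> dsum l (k - 1) + l k * l (k - 1)"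
    using w wpos_range[of k i l j] unfolding vw_def by auto
  have r': "dsum l (k' - 1) < wpos l k' i' j' \<and> wpos l k' i' j' \<le> dsum l (k' - 1) + l k' * l (k' - 1)"
    using w' wpos_range[of k' i' l j'] unfolding vw_def by auto
  have "dsum l (k - 1) + l k * l (k - 1) \<le> dsum l k" using w dsum_Suc[of l "k - 1"] unfolding vw_def by auto
  moreover have "dsum l (k' - 1) + l k' * l (k' - 1) \<le> dsum l k'" using w' dsum_Suc[of l "k' - 1"] unfolding vw_def by auto
  ultimately have "k = k'" using r r' eq w w' unfolding vw_def
    by (intro layer_unique[of k k' l "wpos l k i j"]) auto
  moreover have "(i - 1) * l (k - 1) + j = (i' - 1) * l (k - 1) + j'" using eq \<open>k = k'\<close> unfolding wpos_def by simp
  ultimately show ?thesis using block_inj[of i i' j "l (k - 1)" j'] w w' unfolding vw_def by auto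
qed

lemma bpos_dd: "vb l L k i \<Longrightarrow> bpos l k i \<in> {1..dsum l L}"
proof -
  assume b: "vb l L k i"
  have "bpos l k i \<le> dsum l k" using b bpos_range[of k i l] unfolding vb_def by auto
  moreover have "dsum l k \<le> dsum l L" using b unfolding vb_def by (intro dsum_mono) auto
  ultimately show ?thesis using b unfolding vb_def bpos_def by auto
qed

lemma wpos_dd: "vw l L k i j \<Longrightarrow> wpos l k i j \<in> {1..dsum l L}"
proof -
  assume w: "vw l L k i j"
  have "wpos l k i j \<le> dsum l (k - 1) + l k * l (k - 1)" using w wpos_range[of k i l j] unfolding vw_def by auto
  also have "\<dots> \<le> dsum l k" using w dsum_Suc[of l "k - 1"] unfolding vw_def by auto
  also have "\<dots> \<le> dsum l L" using w unfolding vw_def by (intro dsum_mono) auto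
  finally show ?thesis using w unfolding vw_def wpos_def by auto
qed

lemma has_derivative_bias[derivative_intros]:
  "((\<lambda>\<xi>. bias l idx \<xi> k i) has_derivative (\<lambda>h. bias l idx h k i)) F"
  unfolding bias_def by (intro bounded_linear_imp_has_derivative bounded_linear_vec_nth)

lemma has_derivative_wgt[derivative_intros]:
  "((\<lambda>\<xi>. wgt l idx \<xi> k i j) has_derivative (\<lambda>h. wgt l idx h k i j)) F"
  unfolding wgt_def by (intro bounded_linear_imp_has_derivative bounded_linear_vec_nth)

definition lyapD where
  "lyapD l idx L f \<theta> h = (\<Sum>k = 1..L. real k * (\<Sum>i = 1..l k. 2 * bias l idx \<theta> k i * bias l idx h k i)
        + (\<Sum>i = 1..l k. \<Sum>j = 1..l (k - 1). 2 * wgt l idx \<theta> k i j * wgt l idx h k i j))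
     - 2 * real L * (\<Sum>i = 1..l L. f (\<lambda>_. 0) i * bias l idx h L i)"

lemma lyap_deriv: "(lyap l idx L f has_derivative lyapD l idx L f \<theta>) (at \<theta>)"
proof -
  have "(lyap l idx L f has_derivative (\<lambda>h. (\<Sum>k = 1..L. real k * (\<Sum>i = 1..l k. bias l idx \<theta> k i * bias l idx h k i + bias l idx h k i * bias l idx \<theta> k i)
        + (\<Sum>i = 1..l k. \<Sum>j = 1..l (k - 1). wgt l idx \<theta> k i j * wgt l idx h k i j + wgt l idx h k i j * wgt l idx \<theta> k i j))
     - 2 * real L * (\<Sum>i = 1..l L. f (\<lambda>_. 0) i * bias l idx h L i))) (at \<theta>)"
    unfolding lyap_def[abs_def] power2_eq_square
    by (intro has_derivative_sum has_derivative_add has_derivative_diff has_derivative_mult_right has_derivative_mult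
        has_derivative_const has_derivative_bias has_derivative_wgt)
  then show ?thesis
    by (rule has_derivative_eq_rhs) (simp add: lyapD_def[abs_def] fun_eq_iff algebra_simps sum.distrib)
qed

lemma axis_coord:
  assumes "inj_on idx S" "p \<in> S" "q \<in> S"
  shows "(axis (idx p) 1 :: real^'d) $ idx q = (if q = p then 1 else 0)"
  using assms by (auto simp: axis_def inj_on_eq_iff)

lemma mult_if_one: "(c::real) * (if P then 1 else 0) = (if P then c else 0)"
  by simp

lemma lyapD_bias:
  fixes idx :: "nat \<Rightarrow> 'd::finite"
  assumes inj: "inj_on idx {1..dsum l L}" and v: "vb l L k i"
  shows "lyapD l idx L f \<theta> (axis (idx (bpos l k i)) 1) = 2 * real k * bias l idx \<theta> k i - (if k = L then 2 * real L * f (\<lambda>_. 0) i else 0)"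
proof -
  define e :: "real^'d" where "e = axis (idx (bpos l k i)) 1"
  have be: "bias l idx e k' i' = (if k' = k \<and> i' = i then 1 else 0)" if "vb l L k' i'" for k' i'
  proof -
    have "bias l idx e k' i' = (if bpos l k' i' = bpos l k i then 1 else 0)"
      unfolding bias_pos e_def by (rule axis_coord[OF inj bpos_dd[OF v] bpos_dd[OF that]])
    also have "\<dots> = (if k' = k \<and> i' = i then 1 else 0)"
      using bpos_inj[OF that v] by auto
    finally show ?thesis .
  qed
  have we: "wgt l idx e k' i' j' = 0" if "vw l L k' i' j'" for k' i' j'
  proof -
    have "wgt l idx e k' i' j' = (if wpos l k' i' j' = bpos l k i then 1 else 0)"
      unfolding wgt_pos e_def by (rule axis_coord[OF inj bpos_dd[OF v] wpos_dd[OF that]])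
    then show ?thesis using wpos_bpos_ne[OF that v] by simp
  qed
  have kL: "k \<in> {1..L}" "i \<in> {1..l k}" using v unfolding vb_def by auto
  have A: "(\<Sum>k' = 1..L. real k' * (\<Sum>i' = 1..l k'. 2 * bias l idx \<theta> k' i' * bias l idx e k' i')
        + (\<Sum>i' = 1..l k'. \<Sum>j' = 1..l (k' - 1). 2 * wgt l idx \<theta> k' i' j' * wgt l idx e k' i' j'))
      = (\<Sum>k' = 1..L. if k' = k then 2 * real k * bias l idx \<theta> k i else 0)"
  proof (rule sum.cong[OF refl])
    fix k' assume k': "k' \<in> {1..L}"
    have w0: "(\<Sum>i' = 1..l k'. \<Sum>j' = 1..l (k' - 1). 2 * wgt l idx \<theta> k' i' j' * wgt l idx e k' i' j') = 0"
      using we k' unfolding vw_def by (intro sum.neutral ballI) simp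
    have "(\<Sum>i' = 1..l k'. 2 * bias l idx \<theta> k' i' * bias l idx e k' i')
        = (\<Sum>i' = 1..l k'. if i' = i then (if k' = k then 2 * bias l idx \<theta> k' i' else 0) else 0)"
      using be k' unfolding vb_def by (intro sum.cong refl) auto
    also have "\<dots> = (if k' = k then 2 * bias l idx \<theta> k i else 0)"
      using kL by (simp add: sum.delta)
    finally show "real k' * (\<Sum>i' = 1..l k'. 2 * bias l idx \<theta> k' i' * bias l idx e k' i')
        + (\<Sum>i' = 1..l k'. \<Sum>j' = 1..l (k' - 1). 2 * wgt l idx \<theta> k' i' j' * wgt l idx e k' i' j')
        = (if k' = k then 2 * real k * bias l idx \<theta> k i else 0)"
      using w0 by simp
  qed
  have B: "(\<Sum>i' = 1..l L. f (\<lambda>_. 0) i' * bias l idx e L i') = (if k = L then f (\<lambda>_. 0) i else 0)"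
  proof -
    have L1: "1 \<le> L" using kL by simp
    have "(\<Sum>i' = 1..l L. f (\<lambda>_. 0) i' * bias l idx e L i') = (\<Sum>i' = 1..l L. if i' = i then (if k = L then f (\<lambda>_. 0) i' else 0) else 0)"
      using be L1 unfolding vb_def by (intro sum.cong refl) auto
    also have "\<dots> = (if k = L then f (\<lambda>_. 0) i else 0)"
      using kL by (auto simp: sum.delta)
    finally show ?thesis .
  qed
  show ?thesis unfolding lyapD_def e_def[symmetric] A B using kL by (simp add: sum.delta)
qed

lemma lyapD_wgt:
  fixes idx :: "nat \<Rightarrow> 'd::finite"
  assumes inj: "inj_on idx {1..dsum l L}" and v: "vw l L k i j"
  shows "lyapD l idx L f \<theta> (axis (idx (wpos l k i j)) 1) = 2 * wgt l idx \<theta> k i j"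
proof -
  define e :: "real^'d" where "e = axis (idx (wpos l k i j)) 1"
  have be: "bias l idx e k' i' = 0" if "vb l L k' i'" for k' i'
  proof -
    have "bias l idx e k' i' = (if bpos l k' i' = wpos l k i j then 1 else 0)"
      unfolding bias_pos e_def by (rule axis_coord[OF inj wpos_dd[OF v] bpos_dd[OF that]])
    then show ?thesis using wpos_bpos_ne[OF v that] by simp
  qed
  have we: "wgt l idx e k' i' j' = (if k' = k \<and> i' = i \<and> j' = j then 1 else 0)" if "vw l L k' i' j'" for k' i' j'
  proof -
    have "wgt l idx e k' i' j' = (if wpos l k' i' j' = wpos l k i j then 1 else 0)"
      unfolding wgt_pos e_def by (rule axis_coord[OF inj wpos_dd[OF v] wpos_dd[OF that]])
    also have "\<dots> = (if k' = k \<and> i' = i \<and> j' = j then 1 else 0)"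
      using wpos_inj[OF that v] by auto
    finally show ?thesis .
  qed
  have kL: "k \<in> {1..L}" "i \<in> {1..l k}" "j \<in> {1..l (k - 1)}" using v unfolding vw_def by auto
  have A: "(\<Sum>k' = 1..L. real k' * (\<Sum>i' = 1..l k'. 2 * bias l idx \<theta> k' i' * bias l idx e k' i')
        + (\<Sum>i' = 1..l k'. \<Sum>j' = 1..l (k' - 1). 2 * wgt l idx \<theta> k' i' j' * wgt l idx e k' i' j'))
      = (\<Sum>k' = 1..L. if k' = k then 2 * wgt l idx \<theta> k i j else 0)"
  proof (rule sum.cong[OF refl])
    fix k' assume k': "k' \<in> {1..L}"
    have b0: "(\<Sum>i' = 1..l k'. 2 * bias l idx \<theta> k' i' * bias l idx e k' i') = 0"
      using be k' unfolding vb_def by (intro sum.neutral ballI) simp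
    have "(\<Sum>i' = 1..l k'. \<Sum>j' = 1..l (k' - 1). 2 * wgt l idx \<theta> k' i' j' * wgt l idx e k' i' j')
        = (\<Sum>i' = 1..l k'. if i' = i then (if k' = k then 2 * wgt l idx \<theta> k i j else 0) else 0)"
    proof (rule sum.cong[OF refl])
      fix i' assume i': "i' \<in> {1..l k'}"
      have "(\<Sum>j' = 1..l (k' - 1). 2 * wgt l idx \<theta> k' i' j' * wgt l idx e k' i' j')
          = (\<Sum>j' = 1..l (k' - 1). if j' = j then (if k' = k \<and> i' = i then 2 * wgt l idx \<theta> k i j else 0) else 0)"
        by (rule sum.cong[OF refl]) (use we k' i' in \<open>auto simp: vw_def\<close>)
      also have "\<dots> = (if k' = k \<and> i' = i then 2 * wgt l idx \<theta> k i j else 0)"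
        using kL by (cases "k' = k \<and> i' = i") (auto simp: sum.delta)
      finally show "(\<Sum>j' = 1..l (k' - 1). 2 * wgt l idx \<theta> k' i' j' * wgt l idx e k' i' j')
          = (if i' = i then (if k' = k then 2 * wgt l idx \<theta> k i j else 0) else 0)" by auto
    qed
    also have "\<dots> = (if k' = k then 2 * wgt l idx \<theta> k i j else 0)"
      using kL by (simp add: sum.delta)
    finally show "real k' * (\<Sum>i' = 1..l k'. 2 * bias l idx \<theta> k' i' * bias l idx e k' i')
        + (\<Sum>i' = 1..l k'. \<Sum>j' = 1..l (k' - 1). 2 * wgt l idx \<theta> k' i' j' * wgt l idx e k' i' j')
        = (if k' = k then 2 * wgt l idx \<theta> k i j else 0)"
      using b0 by simp
  qed
  have B: "(\<Sum>i' = 1..l L. f (\<lambda>_. 0) i' * bias l idx e L i') = 0"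
    using be kL unfolding vb_def by (intro sum.neutral ballI) auto
  show ?thesis unfolding lyapD_def e_def[symmetric] A B using kL by (simp add: sum.delta)
qed

lemma grad_lyap_bias:
  fixes idx :: "nat \<Rightarrow> 'd::finite"
  assumes inj: "inj_on idx {1..dsum l L}" and v: "vb l L k i"
  shows "bias l idx (grad (lyap l idx L f) \<theta>) k i = 2 * real k * bias l idx \<theta> k i - (if k = L then 2 * real L * f (\<lambda>_. 0) i else 0)"
proof -
  have "bias l idx (grad (lyap l idx L f) \<theta>) k i = grad (lyap l idx L f) \<theta> $ idx (bpos l k i)" by (simp add: bias_pos)
  also have "\<dots> = grad (lyap l idx L f) \<theta> \<bullet> axis (idx (bpos l k i)) 1" by (rule cart_eq_inner_axis)
  also have "\<dots> = lyapD l idx L f \<theta> (axis (idx (bpos l k i)) 1)" by (rule grad_inner[OF lyap_deriv])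
  also have "\<dots> = 2 * real k * bias l idx \<theta> k i - (if k = L then 2 * real L * f (\<lambda>_. 0) i else 0)"
    by (rule lyapD_bias[OF inj v])
  finally show ?thesis .
qed

lemma grad_lyap_wgt:
  fixes idx :: "nat \<Rightarrow> 'd::finite"
  assumes inj: "inj_on idx {1..dsum l L}" and v: "vw l L k i j"
  shows "wgt l idx (grad (lyap l idx L f) \<theta>) k i j = 2 * wgt l idx \<theta> k i j"
proof -
  have "wgt l idx (grad (lyap l idx L f) \<theta>) k i j = grad (lyap l idx L f) \<theta> $ idx (wpos l k i j)" by (simp add: wgt_pos)
  also have "\<dots> = grad (lyap l idx L f) \<theta> \<bullet> axis (idx (wpos l k i j)) 1" by (rule cart_eq_inner_axis)
  also have "\<dots> = lyapD l idx L f \<theta> (axis (idx (wpos l k i j)) 1)" by (rule grad_inner[OF lyap_deriv])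
  also have "\<dots> = 2 * wgt l idx \<theta> k i j" by (rule lyapD_wgt[OF inj v])
  finally show ?thesis .
qed

lemma net_deriv:
  assumes dact: "\<And>k y. (act k has_real_derivative dact k y) (at y)"
  shows "((\<lambda>\<xi>. net l idx \<xi> act (Suc k) x i) has_derivative
     (\<lambda>h. tg l (wgt l idx \<theta>) (\<lambda>k. net l idx \<theta> act k x) act dact x (bias l idx h) (wgt l idx h) (Suc k) i)) (at \<theta>)"
proof (induction k arbitrary: i)
  case 0
  show ?case
  proof (cases "i \<in> {1..l 1}")
    case True
    have e: "(\<lambda>\<xi>. net l idx \<xi> act (Suc 0) x i) = (\<lambda>\<xi>. bias l idx \<xi> 1 i + (\<Sum>j = 1..l 0. wgt l idx \<xi> 1 i j * x j))"
      using True by (simp add: Defs.affine_def fun_eq_iff)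
    have "((\<lambda>\<xi>. bias l idx \<xi> 1 i + (\<Sum>j = 1..l 0. wgt l idx \<xi> 1 i j * x j)) has_derivative
        (\<lambda>h. bias l idx h 1 i + (\<Sum>j = 1..l 0. wgt l idx h 1 i j * x j))) (at \<theta>)"
      by (intro has_derivative_add has_derivative_sum has_derivative_mult_left has_derivative_bias has_derivative_wgt)
    then show ?thesis unfolding e using True by (simp add: aff_def)
  next
    case False
    have e: "(\<lambda>\<xi>. net l idx \<xi> act (Suc 0) x i) = (\<lambda>\<xi>. 0)"
      using False by (auto simp: Defs.affine_def fun_eq_iff)
    show ?thesis unfolding e using False by (simp add: aff_def del: atLeastAtMost_iff)
  qed
next
  case (Suc k)
  let ?N = "\<lambda>j. net l idx \<theta> act (Suc k) x j"
  let ?Dn = "\<lambda>j h. tg l (wgt l idx \<theta>) (\<lambda>k. net l idx \<theta> act k x) act dact x (bias l idx h) (wgt l idx h) (Suc k) j"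
  have C: "((\<lambda>\<xi>. act (Suc k) (net l idx \<xi> act (Suc k) x j)) has_derivative (\<lambda>h. dact (Suc k) (?N j) * ?Dn j h)) (at \<theta>)" for j
    using has_derivative_compose[OF Suc.IH[of j] dact[of "Suc k" "?N j", unfolded has_field_derivative_def]] .
  show ?case
  proof (cases "i \<in> {1..l (Suc (Suc k))}")
    case True
    have e: "(\<lambda>\<xi>. net l idx \<xi> act (Suc (Suc k)) x i) = (\<lambda>\<xi>. bias l idx \<xi> (Suc (Suc k)) i +
        (\<Sum>j = 1..l (Suc k). wgt l idx \<xi> (Suc (Suc k)) i j * act (Suc k) (net l idx \<xi> act (Suc k) x j)))"
      using True by (simp add: Defs.affine_def fun_eq_iff)
    have "((\<lambda>\<xi>. bias l idx \<xi> (Suc (Suc k)) i +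
        (\<Sum>j = 1..l (Suc k). wgt l idx \<xi> (Suc (Suc k)) i j * act (Suc k) (net l idx \<xi> act (Suc k) x j))) has_derivative
        (\<lambda>h. bias l idx h (Suc (Suc k)) i + (\<Sum>j = 1..l (Suc k). wgt l idx \<theta> (Suc (Suc k)) i j * (dact (Suc k) (?N j) * ?Dn j h)
           + wgt l idx h (Suc (Suc k)) i j * act (Suc k) (?N j)))) (at \<theta>)"
      by (intro has_derivative_add has_derivative_sum has_derivative_mult has_derivative_bias has_derivative_wgt C)
    then show ?thesis unfolding e
      by (rule has_derivative_eq_rhs) (use True in \<open>simp add: fun_eq_iff sum.distrib algebra_simps\<close>)
  next
    case False
    have e: "(\<lambda>\<xi>. net l idx \<xi> act (Suc (Suc k)) x i) = (\<lambda>\<xi>. 0)"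
      using False by (auto simp: Defs.affine_def fun_eq_iff)
    show ?thesis unfolding e using False by (simp del: atLeastAtMost_iff)
  qed
qed

fun NB :: "(nat \<Rightarrow> nat) \<Rightarrow> real \<Rightarrow> real \<Rightarrow> nat \<Rightarrow> real" where
  "NB l M X 0 = 0"
| "NB l M X (Suc 0) = M + real (l 0) * M * X"
| "NB l M X (Suc (Suc k)) = M + real (l (Suc k)) * M * NB l M X (Suc k)"

fun TB :: "(nat \<Rightarrow> nat) \<Rightarrow> real \<Rightarrow> real \<Rightarrow> real \<Rightarrow> nat \<Rightarrow> real" where
  "TB l M X C 0 = 0"
| "TB l M X C (Suc 0) = 1 + real (l 0) * X"
| "TB l M X C (Suc (Suc k)) = 1 + real (l (Suc k)) * NB l M X (Suc k) + real (l (Suc k)) * M * C * TB l M X C (Suc k)"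

lemma NB_nonneg: "M \<ge> 0 \<Longrightarrow> X \<ge> 0 \<Longrightarrow> NB l M X k \<ge> 0"
  by (induction l M X k rule: NB.induct) auto

lemma TB_nonneg: "M \<ge> 0 \<Longrightarrow> X \<ge> 0 \<Longrightarrow> C \<ge> 0 \<Longrightarrow> TB l M X C k \<ge> 0"
  by (induction l M X C k rule: TB.induct) (auto intro!: add_nonneg_nonneg mult_nonneg_nonneg NB_nonneg)

lemma sum_abs_bound:
  fixes g :: "nat \<Rightarrow> real"
  assumes "\<And>j. j \<in> S \<Longrightarrow> \<bar>g j\<bar> \<le> c" "finite S"
  shows "\<bar>\<Sum>j\<in>S. g j\<bar> \<le> real (card S) * c"
proof -
  have "\<bar>\<Sum>j\<in>S. g j\<bar> \<le> (\<Sum>j\<in>S. \<bar>g j\<bar>)" by (rule sum_abs)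
  also have "\<dots> \<le> (\<Sum>j\<in>S. c)" using assms by (intro sum_mono) auto
  finally show ?thesis by simp
qed

lemma prod_bound:
  fixes a b A B :: real
  assumes "\<bar>a\<bar> \<le> A" "\<bar>b\<bar> \<le> B"
  shows "\<bar>a * b\<bar> \<le> A * B"
  using assms by (simp add: abs_mult mult_mono')

lemma aff_bound:
  assumes M: "M \<ge> 0" and Y: "Y \<ge> 0"
    and B: "\<And>i. \<bar>B k i\<bar> \<le> M" and W: "\<And>i j. \<bar>W k i j\<bar> \<le> M"
    and y: "\<And>j. j \<in> {1..l (k - 1)} \<Longrightarrow> \<bar>y j\<bar> \<le> Y"
  shows "\<bar>aff l B W k y i\<bar> \<le> M + real (l (k - 1)) * M * Y"
proof (cases "i \<in> {1..l k}")
  case True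
  have "\<bar>\<Sum>j = 1..l (k - 1). W k i j * y j\<bar> \<le> real (card {1..l (k - 1)}) * (M * Y)"
    by (rule sum_abs_bound) (auto intro!: prod_bound W y)
  then have "\<bar>B k i + (\<Sum>j = 1..l (k - 1). W k i j * y j)\<bar> \<le> M + real (l (k - 1)) * M * Y"
    using B[of i] by (simp add: mult.assoc)
  then show ?thesis using True by (simp add: aff_def)
next
  case False
  then have "aff l B W k y i = 0" unfolding aff_def by auto
  moreover have "0 \<le> M + real (l (k - 1)) * M * Y" using M Y by simp
  ultimately show ?thesis by simp
qed

lemma net_bound:
  assumes M: "M \<ge> 0" and X: "X \<ge> 0"
    and \<xi>: "\<And>c. \<bar>\<xi> $ c\<bar> \<le> M"
    and x: "\<And>j. j \<in> {1..l 0} \<Longrightarrow> \<bar>x j\<bar> \<le> X"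
    and act: "\<And>k y. \<bar>act k y\<bar> \<le> \<bar>y\<bar>"
  shows "\<bar>net l idx \<xi> act k x i\<bar> \<le> NB l M X k"
proof -
  have "\<bar>net l idx \<xi> act (Suc k) x i\<bar> \<le> NB l M X (Suc k)" for k i
  proof (induction k arbitrary: i)
    case 0
    show ?case unfolding net.simps affine_aff NB.simps
      using aff_bound[OF M X, where B="bias l idx \<xi>" and k=1 and W="wgt l idx \<xi>" and l=l and y=x and i=i] \<xi> x
      by (simp add: bias_def wgt_def)
  next
    case (Suc k)
    have "\<bar>act (Suc k) (net l idx \<xi> act (Suc k) x j)\<bar> \<le> NB l M X (Suc k)" for j
      using act[of "Suc k" "net l idx \<xi> act (Suc k) x j"] Suc[of j] by linarith
    then show ?case unfolding net.simps affine_aff NB.simps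
      using aff_bound[OF M NB_nonneg[OF M X], where B="bias l idx \<xi>" and k="Suc (Suc k)" and W="wgt l idx \<xi>" and l=l
          and y="\<lambda>j. act (Suc k) (net l idx \<xi> act (Suc k) x j)" and i=i] \<xi>
      by (simp add: bias_def wgt_def)
  qed
  then show ?thesis by (cases k) auto
qed

lemma tg_bound:
  fixes h \<xi> :: "real^'d"
  assumes M: "M \<ge> 0" and X: "X \<ge> 0" and C: "C \<ge> 0"
    and \<xi>: "\<And>c. \<bar>\<xi> $ c\<bar> \<le> M"
    and x: "\<And>j. j \<in> {1..l 0} \<Longrightarrow> \<bar>x j\<bar> \<le> X"
    and act: "\<And>k y. \<bar>act k y\<bar> \<le> \<bar>y\<bar>"
    and dact: "\<And>k y. \<bar>dact k y\<bar> \<le> C"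
  shows "\<bar>tg l (wgt l idx \<xi>) (\<lambda>k. net l idx \<xi> act k x) act dact x (bias l idx h) (wgt l idx h) k i\<bar> \<le> TB l M X C k * norm h"
proof -
  have "\<bar>tg l (wgt l idx \<xi>) (\<lambda>k. net l idx \<xi> act k x) act dact x (bias l idx h) (wgt l idx h) (Suc k) i\<bar> \<le> TB l M X C (Suc k) * norm h" for k i
  proof (induction k arbitrary: i)
  case 0
  have "\<bar>aff l (bias l idx h) (wgt l idx h) 1 x i\<bar> \<le> norm h + real (l 0) * norm h * X"
    using aff_bound[OF norm_ge_zero[of h] X, where B="bias l idx h" and k=1 and W="wgt l idx h" and l=l and y=x and i=i] x
    by (simp add: bias_def wgt_def component_le_norm_cart)
  then show ?case by (simp add: algebra_simps)
next
  case (Suc k)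
  let ?T = "tg l (wgt l idx \<xi>) (\<lambda>k. net l idx \<xi> act k x) act dact x (bias l idx h) (wgt l idx h)"
  let ?N = "\<lambda>j. net l idx \<xi> act (Suc k) x j"
  have NBk: "\<bar>act (Suc k) (?N j)\<bar> \<le> NB l M X (Suc k)" for j
    using act[of "Suc k" "?N j"] net_bound[where idx=idx and k="Suc k" and i=j and l=l and act=act and x=x and \<xi>=\<xi>, OF M X \<xi> x act] by linarith
  have s1: "\<bar>\<Sum>j = 1..l (Suc k). wgt l idx h (Suc (Suc k)) i j * act (Suc k) (?N j)\<bar>
      \<le> real (l (Suc k)) * (norm h * NB l M X (Suc k))"
    using sum_abs_bound[of "{1..l (Suc k)}" "\<lambda>j. wgt l idx h (Suc (Suc k)) i j * act (Suc k) (?N j)" "norm h * NB l M X (Suc k)"]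
      prod_bound[OF _ NBk] by (simp add: wgt_def component_le_norm_cart)
  have s2: "\<bar>\<Sum>j = 1..l (Suc k). wgt l idx \<xi> (Suc (Suc k)) i j * (dact (Suc k) (?N j) * ?T (Suc k) j)\<bar>
      \<le> real (l (Suc k)) * (M * (C * (TB l M X C (Suc k) * norm h)))"
    using sum_abs_bound[of "{1..l (Suc k)}" "\<lambda>j. wgt l idx \<xi> (Suc (Suc k)) i j * (dact (Suc k) (?N j) * ?T (Suc k) j)"
        "M * (C * (TB l M X C (Suc k) * norm h))"]
      prod_bound[OF _ prod_bound[OF dact Suc.IH]] \<xi> by (simp add: wgt_def)
  have b: "\<bar>bias l idx h (Suc (Suc k)) i\<bar> \<le> norm h" by (simp add: bias_def component_le_norm_cart)
  show ?case
  proof (cases "i \<in> {1..l (Suc (Suc k))}")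
    case True
    have "\<bar>?T (Suc (Suc k)) i\<bar> \<le> norm h + real (l (Suc k)) * (norm h * NB l M X (Suc k)) + real (l (Suc k)) * (M * (C * (TB l M X C (Suc k) * norm h)))"
      using True s1 s2 b by (simp only: tg.simps if_True if_P)
    then show ?thesis by (simp add: algebra_simps)
  next
    case False
    have "0 \<le> TB l M X C (Suc (Suc k)) * norm h" using TB_nonneg[OF M X C, of l "Suc (Suc k)"] by (simp del: TB.simps)
    then show ?thesis using False by (simp del: atLeastAtMost_iff TB.simps)
  qed
  qed
  then show ?thesis by (cases k) auto
qed

lemma net_meas:
  assumes xm: "\<And>j. j \<in> {1..l 0} \<Longrightarrow> (\<lambda>x. x j) \<in> borel_measurable M"
    and am: "\<And>k. act k \<in> borel_measurable borel"
  shows "(\<lambda>x. net l idx \<theta> act k x i) \<in> borel_measurable M"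
proof -
  have "(\<lambda>x. net l idx \<theta> act (Suc k) x i) \<in> borel_measurable M" for k i
  proof (induction k arbitrary: i)
    case 0
    show ?case
    proof (cases "i \<in> {1..l 1}")
      case True
      then have eq: "(\<lambda>x. net l idx \<theta> act (Suc 0) x i) = (\<lambda>x. bias l idx \<theta> 1 i + (\<Sum>j = 1..l 0. wgt l idx \<theta> 1 i j * x j))"
        by (simp add: Defs.affine_def fun_eq_iff)
      show ?thesis unfolding eq
        by (intro borel_measurable_add borel_measurable_sum borel_measurable_times borel_measurable_const xm) simp
    next
      case False
      then have eq: "(\<lambda>x. net l idx \<theta> act (Suc 0) x i) = (\<lambda>x. 0)"
        by (auto simp: Defs.affine_def fun_eq_iff)
      show ?thesis unfolding eq by simp
    qed
  next
    case (Suc k)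
    have c: "(\<lambda>x. act (Suc k) (net l idx \<theta> act (Suc k) x j)) \<in> borel_measurable M" for j
      using measurable_compose[OF Suc.IH am] .
    show ?case
    proof (cases "i \<in> {1..l (Suc (Suc k))}")
      case True
      then have eq: "(\<lambda>x. net l idx \<theta> act (Suc (Suc k)) x i) = (\<lambda>x. bias l idx \<theta> (Suc (Suc k)) i +
          (\<Sum>j = 1..l (Suc k). wgt l idx \<theta> (Suc (Suc k)) i j * act (Suc k) (net l idx \<theta> act (Suc k) x j)))"
        by (simp add: Defs.affine_def fun_eq_iff)
      show ?thesis unfolding eq
        by (intro borel_measurable_add borel_measurable_sum borel_measurable_times borel_measurable_const c)
    next
      case False
      then have eq: "(\<lambda>x. net l idx \<theta> act (Suc (Suc k)) x i) = (\<lambda>x. 0)"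
        by (auto simp: Defs.affine_def fun_eq_iff)
      show ?thesis unfolding eq by simp
    qed
  qed
  then show ?thesis by (cases k) auto
qed

lemma tg_meas:
  assumes xm: "\<And>j. j \<in> {1..l 0} \<Longrightarrow> (\<lambda>x. x j) \<in> borel_measurable M"
    and am: "\<And>k. act k \<in> borel_measurable borel"
    and dm: "\<And>k. dact k \<in> borel_measurable borel"
  shows "(\<lambda>x. tg l W (\<lambda>k. net l idx \<theta> act k x) act dact x Bh Wh k i) \<in> borel_measurable M"
proof -
  have "(\<lambda>x. tg l W (\<lambda>k. net l idx \<theta> act k x) act dact x Bh Wh (Suc k) i) \<in> borel_measurable M" for k i
  proof (induction k arbitrary: i)
    case 0
    show ?case
    proof (cases "i \<in> {1..l 1}")
      case True
      then have eq: "(\<lambda>x. tg l W (\<lambda>k. net l idx \<theta> act k x) act dact x Bh Wh (Suc 0) i) = (\<lambda>x. Bh 1 i + (\<Sum>j = 1..l 0. Wh 1 i j * x j))"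
        by (simp add: aff_def fun_eq_iff)
      show ?thesis unfolding eq
        by (intro borel_measurable_add borel_measurable_sum borel_measurable_times borel_measurable_const xm) simp
    next
      case False
      then have eq: "(\<lambda>x. tg l W (\<lambda>k. net l idx \<theta> act k x) act dact x Bh Wh (Suc 0) i) = (\<lambda>x. 0)"
        by (auto simp: aff_def fun_eq_iff)
      show ?thesis unfolding eq by simp
    qed
  next
    case (Suc k)
    have n: "(\<lambda>x. net l idx \<theta> act (Suc k) x j) \<in> borel_measurable M" for j
      by (rule net_meas[OF xm am])
    have c: "(\<lambda>x. act (Suc k) (net l idx \<theta> act (Suc k) x j)) \<in> borel_measurable M" for j
      using measurable_compose[OF n am] .
    have d: "(\<lambda>x. dact (Suc k) (net l idx \<theta> act (Suc k) x j)) \<in> borel_measurable M" for j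
      using measurable_compose[OF n dm] .
    show ?case
    proof (cases "i \<in> {1..l (Suc (Suc k))}")
      case True
      then have eq: "(\<lambda>x. tg l W (\<lambda>k. net l idx \<theta> act k x) act dact x Bh Wh (Suc (Suc k)) i) = (\<lambda>x.
          Bh (Suc (Suc k)) i + (\<Sum>j = 1..l (Suc k). Wh (Suc (Suc k)) i j * act (Suc k) (net l idx \<theta> act (Suc k) x j))
          + (\<Sum>j = 1..l (Suc k). W (Suc (Suc k)) i j * (dact (Suc k) (net l idx \<theta> act (Suc k) x j) * tg l W (\<lambda>k. net l idx \<theta> act k x) act dact x Bh Wh (Suc k) j)))"
        by (simp add: fun_eq_iff)
      show ?thesis unfolding eq
        by (intro borel_measurable_add borel_measurable_sum borel_measurable_times borel_measurable_const c d Suc.IH)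
    next
      case False
      then have eq: "(\<lambda>x. tg l W (\<lambda>k. net l idx \<theta> act k x) act dact x Bh Wh (Suc (Suc k)) i) = (\<lambda>x. 0)"
        by (auto simp: fun_eq_iff)
      show ?thesis unfolding eq by simp
    qed
  qed
  then show ?thesis by (cases k) auto
qed

locale setting =
  fixes L dd :: nat and l :: "nat \<Rightarrow> nat" and a b AA BB :: real
    and idx :: "nat \<Rightarrow> 'd::finite"
    and R :: "real \<Rightarrow> real \<Rightarrow> real"
    and \<mu> :: "(nat \<Rightarrow> real) measure"
    and f :: "(nat \<Rightarrow> real) \<Rightarrow> (nat \<Rightarrow> real)"
  assumes L_pos: "L \<ge> 1"
    and l_pos: "\<forall>k. l k \<ge> 1"
    and ab: "a < b"
    and AB: "0 < AA" "AA < BB"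
    and dd_def: "dd = (\<Sum>k = 1..L. l k * (l (k - 1) + 1))"
    and idx_bij: "bij_betw idx {1..dd} (UNIV :: 'd set)"
    and R_C1: "\<forall>r \<ge> 1. (\<forall>x. R r differentiable (at x)) \<and> continuous_on UNIV (deriv (R r))"
    and R_zero: "\<forall>r \<ge> 1. \<forall>x. x \<le> AA / r \<longrightarrow> R r x = 0"
    and R_bounds: "\<forall>r \<ge> 1. \<forall>y. 0 \<le> R r y \<and> R r y \<le> max y 0"
    and R_id: "\<forall>r \<ge> 1. \<forall>z. z \<ge> BB / r \<longrightarrow> R r z = z"
    and R_deriv_bdd: "\<exists>C. \<forall>r \<ge> 1. \<forall>x. \<bar>deriv (R r) x\<bar> \<le> C"
    and mu_sets: "sets \<mu> = sets (Pi\<^sub>M {1..l 0} (\<lambda>_. restrict_space lborel {a..b}))"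
    and mu_finite: "emeasure \<mu> (space \<mu>) < \<infinity>"
    and f_meas: "\<forall>i. (\<lambda>x. f x i) \<in> borel_measurable \<mu>"
    and integrable_fin: "\<forall>r \<ge> 1. \<forall>\<phi>. integrable \<mu>
        (\<lambda>x. \<Sum>i = 1..l L. (net l idx \<phi> (act_fin R r) L x i - f x i)\<^sup>2)"
    and integrable_inf: "\<forall>\<phi>. integrable \<mu>
        (\<lambda>x. \<Sum>i = 1..l L. (net l idx \<phi> act_inf L x i - f x i)\<^sup>2)"
begin

definition Xb where "Xb = \<bar>a\<bar> + \<bar>b\<bar>"
definition Cd where "Cd = max (SOME C. \<forall>r \<ge> 1. \<forall>x. \<bar>deriv (R r) x\<bar> \<le> C) 1"
definition dfin :: "real \<Rightarrow> nat \<Rightarrow> real \<Rightarrow> real" where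
  "dfin r k y = deriv (R (r powr (1 / real k))) y"

lemma Xb_nonneg: "Xb \<ge> 0" unfolding Xb_def by simp
lemma Cd_ge1: "Cd \<ge> 1" unfolding Cd_def by simp

lemma dd_dsum: "dd = dsum l L" unfolding dd_def dsum_def ..
lemma inj_idx: "inj_on idx {1..dsum l L}" using idx_bij dd_dsum bij_betw_imp_inj_on by metis

lemma space_mu: "space \<mu> = PiE {1..l 0} (\<lambda>_. {a..b})"
  using sets_eq_imp_space_eq[OF mu_sets] by (simp add: space_PiM)

lemma x_bound: "x \<in> space \<mu> \<Longrightarrow> j \<in> {1..l 0} \<Longrightarrow> \<bar>x j\<bar> \<le> Xb"
proof -
  assume "x \<in> space \<mu>" "j \<in> {1..l 0}"
  then have "a \<le> x j \<and> x j \<le> b" unfolding space_mu by (auto simp: PiE_iff)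
  then show ?thesis unfolding Xb_def by arith
qed

lemma x_meas: "j \<in> {1..l 0} \<Longrightarrow> (\<lambda>x. x j) \<in> borel_measurable \<mu>"
proof -
  assume j: "j \<in> {1..l 0}"
  have "(\<lambda>x. x j) \<in> measurable (Pi\<^sub>M {1..l 0} (\<lambda>_. restrict_space lborel {a..b})) (restrict_space lborel {a..b})"
    using j by (rule measurable_component_singleton)
  moreover have "(\<lambda>x. x) \<in> measurable (restrict_space lborel {a..b}) borel"
    by (intro measurable_restrict_space1 measurable_ident_sets) (simp add: sets_lborel)
  ultimately have "(\<lambda>x. x j) \<in> measurable (Pi\<^sub>M {1..l 0} (\<lambda>_. restrict_space lborel {a..b})) borel"
    using measurable_compose by blast
  then show ?thesis by (subst measurable_cong_sets[OF mu_sets refl])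
qed

lemma fin: "finite_measure \<mu>"
  using mu_finite by (intro finite_measureI) simp

lemma rho_ge1: "r \<ge> 1 \<Longrightarrow> r powr (1 / real k) \<ge> 1"
  by (rule ge_one_powr_ge_zero) auto

lemma deriv_bound: "r \<ge> 1 \<Longrightarrow> \<bar>deriv (R r) y\<bar> \<le> Cd"
proof -
  assume r: "r \<ge> 1"
  have "\<forall>r \<ge> 1. \<forall>x. \<bar>deriv (R r) x\<bar> \<le> (SOME C. \<forall>r \<ge> 1. \<forall>x. \<bar>deriv (R r) x\<bar> \<le> C)"
    using R_deriv_bdd by (rule someI_ex)
  then have "\<bar>deriv (R r) y\<bar> \<le> (SOME C. \<forall>r \<ge> 1. \<forall>x. \<bar>deriv (R r) x\<bar> \<le> C)" using r by blast
  then show ?thesis unfolding Cd_def by (rule max.coboundedI1)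
qed

lemma act_fin_bound: "r \<ge> 1 \<Longrightarrow> \<bar>act_fin R r k y\<bar> \<le> \<bar>y\<bar>"
proof -
  assume r: "r \<ge> 1"
  have "0 \<le> R (r powr (1 / real k)) y \<and> R (r powr (1 / real k)) y \<le> max y 0"
    using R_bounds rho_ge1[OF r, of k] by blast
  then show ?thesis unfolding act_fin_def by arith
qed

lemma dfin_bound: "r \<ge> 1 \<Longrightarrow> \<bar>dfin r k y\<bar> \<le> Cd"
  unfolding dfin_def using deriv_bound rho_ge1 by blast

lemma act_fin_deriv: "r \<ge> 1 \<Longrightarrow> (act_fin R r k has_real_derivative dfin r k y) (at y)"
  unfolding act_fin_def dfin_def using R_C1 rho_ge1[of r k]
  by (simp add: DERIV_deriv_iff_real_differentiable)

lemma act_fin_meas: "r \<ge> 1 \<Longrightarrow> act_fin R r k \<in> borel_measurable borel"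
proof -
  assume r: "r \<ge> 1"
  have "continuous_on UNIV (R (r powr (1 / real k)))"
    using R_C1 rho_ge1[OF r, of k]
    by (intro continuous_at_imp_continuous_on ballI differentiable_imp_continuous_within) auto
  then show ?thesis unfolding act_fin_def by (rule borel_measurable_continuous_onI)
qed

lemma dfin_meas: "r \<ge> 1 \<Longrightarrow> dfin r k \<in> borel_measurable borel"
  unfolding dfin_def[abs_def] using R_C1 rho_ge1
  by (intro borel_measurable_continuous_onI) auto

lemma relu_bound: "\<bar>act_inf k y\<bar> \<le> \<bar>y\<bar>"
  unfolding act_inf_def relu_def by auto

lemma dinf_bound: "\<bar>dinf k y\<bar> \<le> Cd"
  using Cd_ge1 unfolding dinf_def by auto

lemma relu_meas: "act_inf k \<in> borel_measurable borel"
  unfolding act_inf_def relu_def[abs_def] by measurable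

lemma dinf_meas: "dinf k \<in> borel_measurable borel"
  unfolding dinf_def[abs_def] by measurable

end

lemma net_zero: "net l idx 0 act k x i = 0"
proof (cases k)
  case 0 then show ?thesis by simp
next
  case (Suc k')
  then show ?thesis by (cases k') (auto simp: Defs.affine_def bias_def wgt_def)
qed

lemma abs_le_1_sq: "\<bar>t::real\<bar> \<le> 1 + t\<^sup>2"
proof (cases "\<bar>t\<bar> \<le> 1")
  case True
  then show ?thesis using zero_le_power2[of t] by linarith
next
  case False
  then have "\<bar>t\<bar> * 1 \<le> \<bar>t\<bar> * \<bar>t\<bar>" by (intro mult_left_mono) auto
  moreover have "\<bar>t\<bar> * \<bar>t\<bar> = t\<^sup>2" by (simp add: power2_eq_square abs_mult_self_eq)
  ultimately show ?thesis by linarith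
qed

context setting
begin

definition Dg :: "(nat \<Rightarrow> real \<Rightarrow> real) \<Rightarrow> (nat \<Rightarrow> real \<Rightarrow> real) \<Rightarrow> real^'d \<Rightarrow> (nat \<Rightarrow> real) \<Rightarrow> real^'d \<Rightarrow> real" where
  "Dg act dact \<xi> x h = (\<Sum>i = 1..l L. 2 * (net l idx \<xi> act L x i - f x i) *
      tg l (wgt l idx \<xi>) (\<lambda>k. net l idx \<xi> act k x) act dact x (bias l idx h) (wgt l idx h) L i)"

lemma f_sq_int: "i \<in> {1..l L} \<Longrightarrow> integrable \<mu> (\<lambda>x. (f x i)\<^sup>2)"
proof -
  assume i: "i \<in> {1..l L}"
  have int0: "integrable \<mu> (\<lambda>x. \<Sum>i = 1..l L. (f x i)\<^sup>2)"
    using integrable_inf[rule_format, of 0] by (simp add: net_zero)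
  show ?thesis
  proof (rule Bochner_Integration.integrable_bound[OF int0])
    have fi[measurable]: "(\<lambda>x. f x i) \<in> borel_measurable \<mu>" using f_meas by blast
    show "(\<lambda>x. (f x i)\<^sup>2) \<in> borel_measurable \<mu>" by measurable
    show "AE x in \<mu>. norm ((f x i)\<^sup>2) \<le> norm (\<Sum>i = 1..l L. (f x i)\<^sup>2)"
    proof (rule AE_I2)
      fix x
      have "(f x i)\<^sup>2 \<le> (\<Sum>i = 1..l L. (f x i)\<^sup>2)"
        using i by (intro member_le_sum) auto
      moreover have "0 \<le> (\<Sum>i = 1..l L. (f x i)\<^sup>2)" by (intro sum_nonneg) auto
      ultimately show "norm ((f x i)\<^sup>2) \<le> norm (\<Sum>i = 1..l L. (f x i)\<^sup>2)" by simp
    qed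
  qed
qed

lemma f_abs_int: "i \<in> {1..l L} \<Longrightarrow> integrable \<mu> (\<lambda>x. \<bar>f x i\<bar>)"
proof -
  assume i: "i \<in> {1..l L}"
  have "integrable \<mu> (\<lambda>x. 1 + (f x i)\<^sup>2)"
    by (rule Bochner_Integration.integrable_add[OF finite_measure.integrable_const[OF fin] f_sq_int[OF i]])
  then show ?thesis
  proof (rule Bochner_Integration.integrable_bound)
    have fi[measurable]: "(\<lambda>x. f x i) \<in> borel_measurable \<mu>" using f_meas by blast
    show "(\<lambda>x. \<bar>f x i\<bar>) \<in> borel_measurable \<mu>" by measurable
    show "AE x in \<mu>. norm \<bar>f x i\<bar> \<le> norm (1 + (f x i)\<^sup>2)"
    proof (rule AE_I2)
      fix x
      have "\<bar>f x i\<bar> \<le> 1 + (f x i)\<^sup>2" by (rule abs_le_1_sq)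
      then show "norm \<bar>f x i\<bar> \<le> norm (1 + (f x i)\<^sup>2)" by simp
    qed
  qed
qed

lemma Dg_meas:
  assumes am: "\<And>k. act k \<in> borel_measurable borel" and dm: "\<And>k. dact k \<in> borel_measurable borel"
  shows "(\<lambda>x. Dg act dact \<xi> x h) \<in> borel_measurable \<mu>"
  unfolding Dg_def
  by (intro borel_measurable_sum borel_measurable_times borel_measurable_diff borel_measurable_const
      net_meas[OF x_meas am] tg_meas[OF x_meas am dm] f_meas[rule_format])

lemma Dg_bound:
  assumes M: "M \<ge> 0" and \<xi>: "\<And>c. \<bar>\<xi> $ c\<bar> \<le> M" and x: "x \<in> space \<mu>"
    and ab: "\<And>k y. \<bar>act k y\<bar> \<le> \<bar>y\<bar>" and db: "\<And>k y. \<bar>dact k y\<bar> \<le> Cd"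
  shows "\<bar>Dg act dact \<xi> x h\<bar> \<le> (\<Sum>i = 1..l L. 2 * (NB l M Xb L + \<bar>f x i\<bar>) * TB l M Xb Cd L) * norm h"
proof -
  have C: "Cd \<ge> 0" using Cd_ge1 by simp
  have "\<bar>Dg act dact \<xi> x h\<bar> \<le> (\<Sum>i = 1..l L. \<bar>2 * (net l idx \<xi> act L x i - f x i) *
      tg l (wgt l idx \<xi>) (\<lambda>k. net l idx \<xi> act k x) act dact x (bias l idx h) (wgt l idx h) L i\<bar>)"
    unfolding Dg_def by (rule sum_abs)
  also have "\<dots> \<le> (\<Sum>i = 1..l L. 2 * (NB l M Xb L + \<bar>f x i\<bar>) * (TB l M Xb Cd L * norm h))"
  proof (rule sum_mono)
    fix i
    have n: "\<bar>net l idx \<xi> act L x i\<bar> \<le> NB l M Xb L"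
      by (rule net_bound[OF M Xb_nonneg \<xi> x_bound[OF x] ab])
    have "\<bar>2 * (net l idx \<xi> act L x i - f x i)\<bar> \<le> 2 * (NB l M Xb L + \<bar>f x i\<bar>)"
      using n by (simp add: abs_mult)
    moreover have "\<bar>tg l (wgt l idx \<xi>) (\<lambda>k. net l idx \<xi> act k x) act dact x (bias l idx h) (wgt l idx h) L i\<bar> \<le> TB l M Xb Cd L * norm h"
      by (rule tg_bound[OF M Xb_nonneg C \<xi> x_bound[OF x] ab db])
    ultimately show "\<bar>2 * (net l idx \<xi> act L x i - f x i) *
      tg l (wgt l idx \<xi>) (\<lambda>k. net l idx \<xi> act k x) act dact x (bias l idx h) (wgt l idx h) L i\<bar>
      \<le> 2 * (NB l M Xb L + \<bar>f x i\<bar>) * (TB l M Xb Cd L * norm h)"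
      by (rule prod_bound)
  qed
  also have "\<dots> = (\<Sum>i = 1..l L. 2 * (NB l M Xb L + \<bar>f x i\<bar>) * TB l M Xb Cd L) * norm h"
    by (simp add: sum_distrib_right mult.assoc)
  finally show ?thesis .
qed

lemma Bd_int: "integrable \<mu> (\<lambda>x. (\<Sum>i = 1..l L. 2 * (NB l M Xb L + \<bar>f x i\<bar>) * TB l M Xb Cd L))"
  by (intro Bochner_Integration.integrable_sum integrable_mult_right integrable_mult_left
      Bochner_Integration.integrable_add finite_measure.integrable_const[OF fin] f_abs_int) auto

lemma risk_deriv_gen:
  assumes dact: "\<And>k y. (act k has_real_derivative dact k y) (at y)"
    and ab: "\<And>k y. \<bar>act k y\<bar> \<le> \<bar>y\<bar>" and db: "\<And>k y. \<bar>dact k y\<bar> \<le> Cd"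
    and am: "\<And>k. act k \<in> borel_measurable borel" and dm: "\<And>k. dact k \<in> borel_measurable borel"
    and int: "\<And>\<phi>. integrable \<mu> (\<lambda>x. \<Sum>i = 1..l L. (net l idx \<phi> act L x i - f x i)\<^sup>2)"
  shows "(risk l idx L act \<mu> f has_derivative (\<lambda>h. \<integral>x. Dg act dact \<theta> x h \<partial>\<mu>)) (at \<theta>)"
proof -
  define M where "M = norm \<theta> + 1"
  have M: "M \<ge> 0" unfolding M_def by simp
  have LS: "L = Suc (L - 1)" using L_pos by simp
  have e: "risk l idx L act \<mu> f = (\<lambda>\<xi>. \<integral>x. (\<Sum>i = 1..l L. (net l idx \<xi> act L x i - f x i)\<^sup>2) \<partial>\<mu>)"
    unfolding risk_def[abs_def] ..
  show ?thesis unfolding e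
  proof (rule deriv_integral[where \<delta>=1 and Bd="\<lambda>x. (\<Sum>i = 1..l L. 2 * (NB l M Xb L + \<bar>f x i\<bar>) * TB l M Xb Cd L)"])
    fix \<xi> x assume \<xi>: "\<xi> \<in> ball \<theta> 1" and x: "x \<in> space \<mu>"
    have nd: "((\<lambda>\<eta>. net l idx \<eta> act L x i) has_derivative
        (\<lambda>h. tg l (wgt l idx \<xi>) (\<lambda>k. net l idx \<xi> act k x) act dact x (bias l idx h) (wgt l idx h) L i)) (at \<xi>)" for i
      using net_deriv[OF dact, where l=l and idx=idx and k="L - 1" and x=x and i=i and \<theta>=\<xi>] LS by simp
    have nd': "((\<lambda>\<eta>. net l idx \<eta> act L x i - f x i) has_derivative
        (\<lambda>h. tg l (wgt l idx \<xi>) (\<lambda>k. net l idx \<xi> act k x) act dact x (bias l idx h) (wgt l idx h) L i)) (at \<xi>)" for i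
      using has_derivative_diff[OF nd[of i] has_derivative_const[of "f x i"]] by simp
    have "((\<lambda>\<eta>. \<Sum>i = 1..l L. (net l idx \<eta> act L x i - f x i) * (net l idx \<eta> act L x i - f x i)) has_derivative
        (\<lambda>h. \<Sum>i = 1..l L. (net l idx \<xi> act L x i - f x i) * tg l (wgt l idx \<xi>) (\<lambda>k. net l idx \<xi> act k x) act dact x (bias l idx h) (wgt l idx h) L i
            + tg l (wgt l idx \<xi>) (\<lambda>k. net l idx \<xi> act k x) act dact x (bias l idx h) (wgt l idx h) L i * (net l idx \<xi> act L x i - f x i))) (at \<xi>)"
      by (intro has_derivative_sum has_derivative_mult nd')
    then show "((\<lambda>\<eta>. \<Sum>i = 1..l L. (net l idx \<eta> act L x i - f x i)\<^sup>2) has_derivative Dg act dact \<xi> x) (at \<xi>)"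
      unfolding power2_eq_square
      by (rule has_derivative_eq_rhs) (simp add: Dg_def[abs_def] fun_eq_iff algebra_simps)
  next
    fix \<xi> x h assume \<xi>: "\<xi> \<in> ball \<theta> 1" and x: "x \<in> space \<mu>"
    have "\<bar>\<xi> $ c\<bar> \<le> M" for c
    proof -
      have "norm \<xi> \<le> norm \<theta> + norm (\<xi> - \<theta>)" by (metis add_diff_cancel_left' norm_triangle_ineq diff_add_cancel add.commute)
      also have "\<dots> \<le> M" using \<xi> unfolding M_def by (simp add: dist_norm norm_minus_commute)
      finally show ?thesis using component_le_norm_cart[of \<xi> c] by linarith
    qed
    then show "\<bar>Dg act dact \<xi> x h\<bar> \<le> (\<Sum>i = 1..l L. 2 * (NB l M Xb L + \<bar>f x i\<bar>) * TB l M Xb Cd L) * norm h"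
      by (rule Dg_bound[OF M _ x ab db])
  next
    show "integrable \<mu> (\<lambda>x. \<Sum>i = 1..l L. 2 * (NB l M Xb L + \<bar>f x i\<bar>) * TB l M Xb Cd L)" by (rule Bd_int)
  next
    fix \<xi> show "integrable \<mu> (\<lambda>x. \<Sum>i = 1..l L. (net l idx \<xi> act L x i - f x i)\<^sup>2)" by (rule int)
  next
    fix h show "(\<lambda>x. Dg act dact \<theta> x h) \<in> borel_measurable \<mu>" by (rule Dg_meas[OF am dm])
  qed simp
qed

end

definition ee :: "nat \<Rightarrow> real \<Rightarrow> real" where
  "ee k r = (if k = 0 then 0 else r powr (- 1 / real k))"

lemma ee_nonneg: "ee k r \<ge> 0" unfolding ee_def by simp

lemma ee_mono: "r \<ge> 1 \<Longrightarrow> ee k r \<le> r powr (- 1 / real (Suc k))"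
proof (cases k)
  case 0 then show ?thesis by (simp add: ee_def)
next
  case (Suc k')
  assume r: "r \<ge> 1"
  have "- 1 / real k \<le> - 1 / real (Suc k)" using Suc by (simp add: divide_simps)
  then show ?thesis using Suc r unfolding ee_def by (simp add: powr_mono)
qed

lemma ee_tendsto: "((\<lambda>r. ee k r) \<longlongrightarrow> 0) at_top"
proof (cases k)
  case 0 then show ?thesis by (simp add: ee_def)
next
  case (Suc k')
  have "((\<lambda>r. r powr (- 1 / real k)) \<longlongrightarrow> 0) at_top"
    using Suc by (intro tendsto_neg_powr filterlim_ident) simp
  then show ?thesis using Suc unfolding ee_def by simp
qed

lemma powr_neg_tendsto: "((\<lambda>r::real. r powr (- 1 / real (Suc k))) \<longlongrightarrow> 0) at_top"
  by (intro tendsto_neg_powr filterlim_ident) simp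

lemma ee_ratio_tendsto: "((\<lambda>r. ee k r * r powr (1 / real (Suc k))) \<longlongrightarrow> 0) at_top"
proof (cases k)
  case 0 then show ?thesis by (simp add: ee_def)
next
  case (Suc k')
  have "1 / real (Suc k) < 1 / real k" using Suc by (intro divide_strict_left_mono) auto
  then have neg: "- 1 / real k + 1 / real (Suc k) < 0" by simp
  have "((\<lambda>r. r powr (- 1 / real k + 1 / real (Suc k))) \<longlongrightarrow> 0) at_top"
    by (intro tendsto_neg_powr[OF neg] filterlim_ident)
  moreover have "eventually (\<lambda>r. r powr (- 1 / real k + 1 / real (Suc k)) = ee k r * r powr (1 / real (Suc k))) at_top"
    using eventually_gt_at_top[of 0] by eventually_elim (use Suc in \<open>simp only: ee_def powr_add, simp\<close>)
  ultimately show ?thesis by (rule Lim_transform_eventually)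
qed

context setting
begin

lemma R_relu_close:
  assumes \<rho>: "\<rho> \<ge> 1"
  shows "\<bar>R \<rho> y - relu z\<bar> \<le> BB / \<rho> + \<bar>y - z\<bar>"
proof -
  have bnd: "0 \<le> R \<rho> y \<and> R \<rho> y \<le> max y 0" using R_bounds \<rho> by blast
  have B0: "BB / \<rho> > 0" using AB \<rho> by simp
  have "\<bar>R \<rho> y - relu y\<bar> \<le> BB / \<rho>"
  proof (cases "y \<ge> BB / \<rho>")
    case True
    then have "R \<rho> y = y" using R_id \<rho> by blast
    then show ?thesis using True B0 by (simp add: relu_def)
  next
    case False
    then show ?thesis using bnd B0 by (auto simp: relu_def)
  qed
  moreover have "\<bar>relu y - relu z\<bar> \<le> \<bar>y - z\<bar>" by (auto simp: relu_def)
  ultimately show ?thesis by linarith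
qed

lemma deriv_R_one:
  assumes \<rho>: "\<rho> \<ge> 1" and y: "y > BB / \<rho>"
  shows "deriv (R \<rho>) y = 1"
proof -
  have "((\<lambda>z. z) has_field_derivative 1) (at y)" by (rule DERIV_ident)
  then have "(R \<rho> has_field_derivative 1) (at y)"
    by (rule has_field_derivative_transform_within_open[where S="{BB / \<rho> <..}"])
       (use y R_id \<rho> in auto)
  then show ?thesis by (rule DERIV_imp_deriv)
qed

lemma deriv_R_zero:
  assumes \<rho>: "\<rho> \<ge> 1" and y: "y < AA / \<rho>"
  shows "deriv (R \<rho>) y = 0"
proof -
  have "((\<lambda>z. 0) has_field_derivative 0) (at y)" by (rule DERIV_const)
  then have "(R \<rho> has_field_derivative 0) (at y)"
    by (rule has_field_derivative_transform_within_open[where S="{..< AA / \<rho>}"])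
       (use y R_zero \<rho> in \<open>auto simp: less_imp_le\<close>)
  then show ?thesis by (rule DERIV_imp_deriv)
qed

lemma act_fin_close:
  "r \<ge> 1 \<Longrightarrow> \<bar>act_fin R r (Suc k) y - act_inf (Suc k) z\<bar> \<le> BB * r powr (- 1 / real (Suc k)) + \<bar>y - z\<bar>"
  using R_relu_close[OF rho_ge1[of r "Suc k"], of y z]
  by (simp add: act_fin_def act_inf_def powr_minus_divide)

lemma diff_bound:
  "\<exists>c\<ge>0. \<forall>r\<ge>1. \<forall>i. \<bar>net l idx \<theta> (act_fin R r) (Suc k) x i - net l idx \<theta> act_inf (Suc k) x i\<bar> \<le> c * ee k r"
proof (induction k)
  case 0
  show ?case by (rule exI[of _ 0]) simp
next
  case (Suc k)
  then obtain c where c: "c \<ge> 0" "\<forall>r\<ge>1. \<forall>i. \<bar>net l idx \<theta> (act_fin R r) (Suc k) x i - net l idx \<theta> act_inf (Suc k) x i\<bar> \<le> c * ee k r"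
    by blast
  define c' where "c' = real (l (Suc k)) * norm \<theta> * (BB + c)"
  have c'0: "c' \<ge> 0" unfolding c'_def using c AB by simp
  show ?case
  proof (intro exI[of _ c'] conjI allI impI c'0)
    fix r :: real and i assume r: "r \<ge> 1"
    let ?p = "r powr (- 1 / real (Suc k))"
    have ee1: "ee (Suc k) r = ?p" by (simp add: ee_def)
    have t: "\<bar>wgt l idx \<theta> (Suc (Suc k)) i j * (act_fin R r (Suc k) (net l idx \<theta> (act_fin R r) (Suc k) x j)
        - act_inf (Suc k) (net l idx \<theta> act_inf (Suc k) x j))\<bar> \<le> norm \<theta> * ((BB + c) * ?p)" for j
    proof (rule prod_bound)
      show "\<bar>wgt l idx \<theta> (Suc (Suc k)) i j\<bar> \<le> norm \<theta>" by (simp add: wgt_def component_le_norm_cart)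
      have "\<bar>act_fin R r (Suc k) (net l idx \<theta> (act_fin R r) (Suc k) x j) - act_inf (Suc k) (net l idx \<theta> act_inf (Suc k) x j)\<bar>
          \<le> BB * ?p + c * ee k r"
        using act_fin_close[OF r, of k] c(2) r by (meson add_left_mono order_trans)
      also have "\<dots> \<le> BB * ?p + c * ?p" using ee_mono[OF r, of k] c(1) by (simp add: mult_left_mono)
      finally show "\<bar>act_fin R r (Suc k) (net l idx \<theta> (act_fin R r) (Suc k) x j) - act_inf (Suc k) (net l idx \<theta> act_inf (Suc k) x j)\<bar>
          \<le> (BB + c) * ?p" by (simp add: algebra_simps)
    qed
    show "\<bar>net l idx \<theta> (act_fin R r) (Suc (Suc k)) x i - net l idx \<theta> act_inf (Suc (Suc k)) x i\<bar> \<le> c' * ee (Suc k) r"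
    proof (cases "i \<in> {1..l (Suc (Suc k))}")
      case True
      have "net l idx \<theta> (act_fin R r) (Suc (Suc k)) x i - net l idx \<theta> act_inf (Suc (Suc k)) x i
          = (\<Sum>j = 1..l (Suc k). wgt l idx \<theta> (Suc (Suc k)) i j * (act_fin R r (Suc k) (net l idx \<theta> (act_fin R r) (Suc k) x j)
             - act_inf (Suc k) (net l idx \<theta> act_inf (Suc k) x j)))"
        using True by (simp add: Defs.affine_def sum_subtractf algebra_simps)
      also have "\<bar>\<dots>\<bar> \<le> real (card {1..l (Suc k)}) * (norm \<theta> * ((BB + c) * ?p))"
        by (rule sum_abs_bound[OF t]) simp
      finally show ?thesis unfolding ee1 c'_def by (simp add: algebra_simps)
    next
      case False
      then show ?thesis using c'0 ee_nonneg[of "Suc k" r] by (auto simp: Defs.affine_def)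
    qed
  qed
qed

end

context setting
begin

lemma diff_bound':
  obtains c where "c \<ge> 0" "\<And>r i. r \<ge> 1 \<Longrightarrow> \<bar>net l idx \<theta> (act_fin R r) (Suc k) x i - net l idx \<theta> act_inf (Suc k) x i\<bar> \<le> c * ee k r"
  using diff_bound[where \<theta>=\<theta> and x=x and k=k] by blast

lemma dfin_eventually:
  "eventually (\<lambda>r. dfin r (Suc k) (net l idx \<theta> (act_fin R r) (Suc k) x i) = dinf (Suc k) (net l idx \<theta> act_inf (Suc k) x i)) at_top"
proof -
  obtain c where c: "c \<ge> 0" "\<And>r i. r \<ge> 1 \<Longrightarrow> \<bar>net l idx \<theta> (act_fin R r) (Suc k) x i - net l idx \<theta> act_inf (Suc k) x i\<bar> \<le> c * ee k r"
    using diff_bound[where \<theta>=\<theta> and k=k and x=x] by blast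
  define Ni where "Ni = net l idx \<theta> act_inf (Suc k) x i"
  define Nr where "Nr r = net l idx \<theta> (act_fin R r) (Suc k) x i" for r
  have cl: "\<bar>Nr r - Ni\<bar> \<le> c * ee k r" if "r \<ge> 1" for r using c(2)[OF that] unfolding Nr_def Ni_def .
  have rho: "r powr (1 / real (Suc k)) \<ge> 1" if "r \<ge> 1" for r using rho_ge1[OF that] .
  have "eventually (\<lambda>r. dfin r (Suc k) (Nr r) = dinf (Suc k) Ni) at_top"
  proof (cases "Ni > 0")
    case True
    have "((\<lambda>r. c * ee k r + BB * r powr (- 1 / real (Suc k))) \<longlongrightarrow> c * 0 + BB * 0) at_top"
      by (intro tendsto_add tendsto_mult tendsto_const ee_tendsto powr_neg_tendsto)
    then have "eventually (\<lambda>r. c * ee k r + BB * r powr (- 1 / real (Suc k)) < Ni) at_top"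
      using True by (intro order_tendstoD(2)) auto
    then show ?thesis using eventually_ge_at_top[of 1]
    proof eventually_elim
      case (elim r)
      have "Nr r > BB / r powr (1 / real (Suc k))"
        using elim cl[OF elim(2)] by (simp add: powr_minus_divide)
      then have "deriv (R (r powr (1 / real (Suc k)))) (Nr r) = 1" by (rule deriv_R_one[OF rho[OF elim(2)]])
      then show ?case using True by (simp add: dfin_def dinf_def)
    qed
  next
    case False
    have "((\<lambda>r. c * (ee k r * r powr (1 / real (Suc k)))) \<longlongrightarrow> c * 0) at_top"
      by (intro tendsto_mult tendsto_const ee_ratio_tendsto)
    then have "eventually (\<lambda>r. c * (ee k r * r powr (1 / real (Suc k))) < AA) at_top"
      using AB by (intro order_tendstoD(2)) auto
    then show ?thesis using eventually_ge_at_top[of 1]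
    proof eventually_elim
      case (elim r)
      have pos: "r powr (1 / real (Suc k)) > 0" using elim(2) by simp
      have "c * ee k r < AA / r powr (1 / real (Suc k))"
        using elim(1) pos by (simp add: field_simps)
      then have "Nr r < AA / r powr (1 / real (Suc k))"
        using False cl[OF elim(2)] by linarith
      then have "deriv (R (r powr (1 / real (Suc k)))) (Nr r) = 0" by (rule deriv_R_zero[OF rho[OF elim(2)]])
      then show ?case using False by (simp add: dfin_def dinf_def)
    qed
  qed
  then show ?thesis unfolding Nr_def Ni_def .
qed

lemma act_conv:
  "((\<lambda>r. act_fin R r (Suc k) (net l idx \<theta> (act_fin R r) (Suc k) x i)) \<longlongrightarrow> act_inf (Suc k) (net l idx \<theta> act_inf (Suc k) x i)) at_top"
proof -
  obtain c where c: "c \<ge> 0" "\<And>r i. r \<ge> 1 \<Longrightarrow> \<bar>net l idx \<theta> (act_fin R r) (Suc k) x i - net l idx \<theta> act_inf (Suc k) x i\<bar> \<le> c * ee k r"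
    using diff_bound[where \<theta>=\<theta> and k=k and x=x] by blast
  have "((\<lambda>r. BB * r powr (- 1 / real (Suc k)) + c * ee k r) \<longlongrightarrow> BB * 0 + c * 0) at_top"
    by (intro tendsto_add tendsto_mult tendsto_const ee_tendsto powr_neg_tendsto)
  then have lim0: "((\<lambda>r. BB * r powr (- 1 / real (Suc k)) + c * ee k r) \<longlongrightarrow> 0) at_top" by simp
  have "((\<lambda>r. act_fin R r (Suc k) (net l idx \<theta> (act_fin R r) (Suc k) x i) - act_inf (Suc k) (net l idx \<theta> act_inf (Suc k) x i)) \<longlongrightarrow> 0) at_top"
  proof (rule Lim_null_comparison[OF _ lim0])
    show "eventually (\<lambda>r. norm (act_fin R r (Suc k) (net l idx \<theta> (act_fin R r) (Suc k) x i) - act_inf (Suc k) (net l idx \<theta> act_inf (Suc k) x i))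
        \<le> BB * r powr (- 1 / real (Suc k)) + c * ee k r) at_top"
      using eventually_ge_at_top[of 1]
    proof eventually_elim
      case (elim r)
      show ?case using act_fin_close[OF elim, of k "net l idx \<theta> (act_fin R r) (Suc k) x i" "net l idx \<theta> act_inf (Suc k) x i"] c(2)[OF elim, of i]
        by simp
    qed
  qed
  then show ?thesis by (rule LIM_zero_cancel)
qed

lemma net_conv:
  "((\<lambda>r. net l idx \<theta> (act_fin R r) (Suc k) x i) \<longlongrightarrow> net l idx \<theta> act_inf (Suc k) x i) at_top"
proof -
  obtain c where c: "c \<ge> 0" "\<And>r i. r \<ge> 1 \<Longrightarrow> \<bar>net l idx \<theta> (act_fin R r) (Suc k) x i - net l idx \<theta> act_inf (Suc k) x i\<bar> \<le> c * ee k r"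
    using diff_bound[where \<theta>=\<theta> and k=k and x=x] by blast
  have lim0: "((\<lambda>r. c * ee k r) \<longlongrightarrow> 0) at_top"
    using tendsto_mult[OF tendsto_const[of c] ee_tendsto[of k]] by simp
  have "((\<lambda>r. net l idx \<theta> (act_fin R r) (Suc k) x i - net l idx \<theta> act_inf (Suc k) x i) \<longlongrightarrow> 0) at_top"
  proof (rule Lim_null_comparison[OF _ lim0])
    show "eventually (\<lambda>r. norm (net l idx \<theta> (act_fin R r) (Suc k) x i - net l idx \<theta> act_inf (Suc k) x i) \<le> c * ee k r) at_top"
      using eventually_ge_at_top[of 1] by eventually_elim (simp add: c(2))
  qed
  then show ?thesis by (rule LIM_zero_cancel)
qed

lemma tg_conv:
  "((\<lambda>r. tg l (wgt l idx \<theta>) (\<lambda>k. net l idx \<theta> (act_fin R r) k x) (act_fin R r) (dfin r) x Bh Wh (Suc k) i)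
     \<longlongrightarrow> tg l (wgt l idx \<theta>) (\<lambda>k. net l idx \<theta> act_inf k x) act_inf dinf x Bh Wh (Suc k) i) at_top"
proof (induction k arbitrary: i)
  case 0
  show ?case by simp
next
  case (Suc k)
  have dconv: "((\<lambda>r. dfin r (Suc k) (net l idx \<theta> (act_fin R r) (Suc k) x j)) \<longlongrightarrow> dinf (Suc k) (net l idx \<theta> act_inf (Suc k) x j)) at_top" for j
    using dfin_eventually[of k \<theta> x j] by (rule Lim_transform_eventually[OF tendsto_const, OF eventually_mono]) simp
  show ?case
  proof (cases "i \<in> {1..l (Suc (Suc k))}")
    case True
    let ?Tr = "\<lambda>r. tg l (wgt l idx \<theta>) (\<lambda>k. net l idx \<theta> (act_fin R r) k x) (act_fin R r) (dfin r) x Bh Wh (Suc k)"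
    let ?Ti = "tg l (wgt l idx \<theta>) (\<lambda>k. net l idx \<theta> act_inf k x) act_inf dinf x Bh Wh (Suc k)"
    have lim: "((\<lambda>r. Bh (Suc (Suc k)) i + (\<Sum>j = 1..l (Suc k). Wh (Suc (Suc k)) i j * act_fin R r (Suc k) (net l idx \<theta> (act_fin R r) (Suc k) x j))
      + (\<Sum>j = 1..l (Suc k). wgt l idx \<theta> (Suc (Suc k)) i j * (dfin r (Suc k) (net l idx \<theta> (act_fin R r) (Suc k) x j) * ?Tr r j)))
      \<longlongrightarrow> Bh (Suc (Suc k)) i + (\<Sum>j = 1..l (Suc k). Wh (Suc (Suc k)) i j * act_inf (Suc k) (net l idx \<theta> act_inf (Suc k) x j))
      + (\<Sum>j = 1..l (Suc k). wgt l idx \<theta> (Suc (Suc k)) i j * (dinf (Suc k) (net l idx \<theta> act_inf (Suc k) x j) * ?Ti j))) at_top"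
      by (intro tendsto_add tendsto_sum tendsto_mult tendsto_const act_conv dconv Suc.IH)
    show ?thesis using lim True by simp
  next
    case False
    then show ?thesis by (simp del: atLeastAtMost_iff)
  qed
qed

end

context setting
begin

lemma Dg_lin:
  "Dg act dact \<theta> x (\<alpha> *\<^sub>R h1 + \<beta> *\<^sub>R h2) = \<alpha> * Dg act dact \<theta> x h1 + \<beta> * Dg act dact \<theta> x h2"
proof -
  have b: "bias l idx (\<alpha> *\<^sub>R h1 + \<beta> *\<^sub>R h2) = (\<lambda>k i. \<alpha> * bias l idx h1 k i + \<beta> * bias l idx h2 k i)"
    by (simp add: fun_eq_iff bias_def)
  have w: "wgt l idx (\<alpha> *\<^sub>R h1 + \<beta> *\<^sub>R h2) = (\<lambda>k i j. \<alpha> * wgt l idx h1 k i j + \<beta> * wgt l idx h2 k i j)"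
    by (simp add: fun_eq_iff wgt_def)
  let ?T = "\<lambda>h i. tg l (wgt l idx \<theta>) (\<lambda>k. net l idx \<theta> act k x) act dact x (bias l idx h) (wgt l idx h) L i"
  have "Dg act dact \<theta> x (\<alpha> *\<^sub>R h1 + \<beta> *\<^sub>R h2) = (\<Sum>i = 1..l L. \<alpha> * (2 * (net l idx \<theta> act L x i - f x i) * ?T h1 i)
      + \<beta> * (2 * (net l idx \<theta> act L x i - f x i) * ?T h2 i))"
    unfolding Dg_def b w tg_lin by (rule sum.cong) (simp_all add: algebra_simps)
  also have "\<dots> = \<alpha> * Dg act dact \<theta> x h1 + \<beta> * Dg act dact \<theta> x h2"
    unfolding Dg_def by (simp only: sum.distrib sum_distrib_left)
  finally show ?thesis .
qed

lemma Dg_int: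
  assumes ab: "\<And>k y. \<bar>act k y\<bar> \<le> \<bar>y\<bar>" and db: "\<And>k y. \<bar>dact k y\<bar> \<le> Cd"
    and am: "\<And>k. act k \<in> borel_measurable borel" and dm: "\<And>k. dact k \<in> borel_measurable borel"
  shows "integrable \<mu> (\<lambda>x. Dg act dact \<theta> x h)"
proof (rule Bochner_Integration.integrable_bound)
  show "integrable \<mu> (\<lambda>x. (\<Sum>i = 1..l L. 2 * (NB l (norm \<theta>) Xb L + \<bar>f x i\<bar>) * TB l (norm \<theta>) Xb Cd L) * norm h)"
    using Bd_int by simp
  show "(\<lambda>x. Dg act dact \<theta> x h) \<in> borel_measurable \<mu>" by (rule Dg_meas[OF am dm])
  show "AE x in \<mu>. norm (Dg act dact \<theta> x h) \<le> norm ((\<Sum>i = 1..l L. 2 * (NB l (norm \<theta>) Xb L + \<bar>f x i\<bar>) * TB l (norm \<theta>) Xb Cd L) * norm h)"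
  proof (rule AE_I2)
    fix x assume x: "x \<in> space \<mu>"
    have "\<bar>Dg act dact \<theta> x h\<bar> \<le> (\<Sum>i = 1..l L. 2 * (NB l (norm \<theta>) Xb L + \<bar>f x i\<bar>) * TB l (norm \<theta>) Xb Cd L) * norm h"
      by (rule Dg_bound[OF norm_ge_zero _ x ab db]) (rule component_le_norm_cart)
    then show "norm (Dg act dact \<theta> x h) \<le> norm ((\<Sum>i = 1..l L. 2 * (NB l (norm \<theta>) Xb L + \<bar>f x i\<bar>) * TB l (norm \<theta>) Xb Cd L) * norm h)"
      by simp
  qed
qed

definition PhiI where "PhiI \<theta> h = (\<integral>x. Dg act_inf dinf \<theta> x h \<partial>\<mu>)"
definition PhiR where "PhiR r \<theta> h = (\<integral>x. Dg (act_fin R r) (dfin r) \<theta> x h \<partial>\<mu>)"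

lemma PhiI_linear: "linear (PhiI \<theta>)"
proof (rule linearI)
  have int: "integrable \<mu> (\<lambda>x. Dg act_inf dinf \<theta> x h)" for h
    by (rule Dg_int[OF relu_bound dinf_bound relu_meas dinf_meas])
  fix b1 b2
  have "Dg act_inf dinf \<theta> x (b1 + b2) = Dg act_inf dinf \<theta> x b1 + Dg act_inf dinf \<theta> x b2" for x
    using Dg_lin[of act_inf dinf \<theta> x 1 b1 1 b2] by simp
  then show "PhiI \<theta> (b1 + b2) = PhiI \<theta> b1 + PhiI \<theta> b2"
    unfolding PhiI_def using int by simp
next
  fix r b
  have "Dg act_inf dinf \<theta> x (r *\<^sub>R b) = r * Dg act_inf dinf \<theta> x b" for x
    using Dg_lin[of act_inf dinf \<theta> x r b 0 b] by simp
  then show "PhiI \<theta> (r *\<^sub>R b) = r *\<^sub>R PhiI \<theta> b"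
    unfolding PhiI_def by simp
qed

lemma risk_fin_deriv: "r \<ge> 1 \<Longrightarrow> (risk l idx L (act_fin R r) \<mu> f has_derivative PhiR r \<theta>) (at \<theta>)"
  unfolding PhiR_def[abs_def]
  by (rule risk_deriv_gen[OF act_fin_deriv act_fin_bound dfin_bound act_fin_meas dfin_meas integrable_fin[rule_format]])

lemma Dg_conv: "((\<lambda>r. Dg (act_fin R r) (dfin r) \<theta> x h) \<longlongrightarrow> Dg act_inf dinf \<theta> x h) at_top"
proof -
  have LS: "L = Suc (L - 1)" using L_pos by simp
  show ?thesis unfolding Dg_def
    apply (subst (1 2 3 4 5 6) LS)
    by (intro tendsto_sum tendsto_mult tendsto_diff tendsto_const net_conv tg_conv)
qed

lemma PhiR_conv: "((\<lambda>r. PhiR r \<theta> h) \<longlongrightarrow> PhiI \<theta> h) at_top"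
proof -
  define w where "w x = (\<Sum>i = 1..l L. 2 * (NB l (norm \<theta>) Xb L + \<bar>f x i\<bar>) * TB l (norm \<theta>) Xb Cd L) * norm h" for x
  have lim: "((\<lambda>r. \<integral>x. Dg (act_fin R (max r 1)) (dfin (max r 1)) \<theta> x h \<partial>\<mu>) \<longlongrightarrow> \<integral>x. Dg act_inf dinf \<theta> x h \<partial>\<mu>) at_top"
  proof (rule integral_dominated_convergence_at_top[where w=w])
    show "(\<lambda>x. Dg act_inf dinf \<theta> x h) \<in> borel_measurable \<mu>" by (rule Dg_meas[OF relu_meas dinf_meas])
    show "(\<lambda>x. Dg (act_fin R (max t 1)) (dfin (max t 1)) \<theta> x h) \<in> borel_measurable \<mu>" for t
      by (rule Dg_meas[OF act_fin_meas dfin_meas]) auto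
    show "integrable \<mu> w" unfolding w_def using Bd_int by simp
    show "AE x in \<mu>. ((\<lambda>r. Dg (act_fin R (max r 1)) (dfin (max r 1)) \<theta> x h) \<longlongrightarrow> Dg act_inf dinf \<theta> x h) at_top"
    proof (rule AE_I2)
      fix x
      have "eventually (\<lambda>r. Dg (act_fin R r) (dfin r) \<theta> x h = Dg (act_fin R (max r 1)) (dfin (max r 1)) \<theta> x h) at_top"
        using eventually_ge_at_top[of 1] by eventually_elim (simp add: max_def)
      then show "((\<lambda>r. Dg (act_fin R (max r 1)) (dfin (max r 1)) \<theta> x h) \<longlongrightarrow> Dg act_inf dinf \<theta> x h) at_top"
        by (rule Lim_transform_eventually[OF Dg_conv])
    qed
    show "\<forall>\<^sub>F i in at_top. AE x in \<mu>. norm (Dg (act_fin R (max i 1)) (dfin (max i 1)) \<theta> x h) \<le> w x"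
    proof (rule always_eventually, rule allI, rule AE_I2)
      fix t x assume x: "x \<in> space \<mu>"
      have "\<bar>Dg (act_fin R (max t 1)) (dfin (max t 1)) \<theta> x h\<bar> \<le> w x"
        unfolding w_def
        by (rule Dg_bound[OF norm_ge_zero component_le_norm_cart x act_fin_bound dfin_bound]) auto
      then show "norm (Dg (act_fin R (max t 1)) (dfin (max t 1)) \<theta> x h) \<le> w x" by simp
    qed
  qed
  have "eventually (\<lambda>r. (\<integral>x. Dg (act_fin R (max r 1)) (dfin (max r 1)) \<theta> x h \<partial>\<mu>) = PhiR r \<theta> h) at_top"
    using eventually_ge_at_top[of 1] by eventually_elim (simp add: max_def PhiR_def)
  from Lim_transform_eventually[OF lim this] show ?thesis unfolding PhiI_def .
qed

lemma grad_risk_conv: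
  "((\<lambda>r. grad (risk l idx L (act_fin R r) \<mu> f) \<theta>) \<longlongrightarrow> (\<Sum>b\<in>Basis. PhiI \<theta> b *\<^sub>R b)) at_top"
proof -
  have "((\<lambda>r. \<Sum>b\<in>Basis. PhiR r \<theta> b *\<^sub>R b) \<longlongrightarrow> (\<Sum>b\<in>Basis. PhiI \<theta> b *\<^sub>R b)) at_top"
    by (intro tendsto_sum tendsto_scaleR PhiR_conv tendsto_const)
  moreover have "eventually (\<lambda>r. (\<Sum>b\<in>Basis. PhiR r \<theta> b *\<^sub>R b) = grad (risk l idx L (act_fin R r) \<mu> f) \<theta>) at_top"
    using eventually_ge_at_top[of 1] by eventually_elim (simp add: grad_eq[OF risk_fin_deriv])
  ultimately show ?thesis by (rule Lim_transform_eventually)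
qed

end

context setting
begin

lemma Dg_gradV:
  "Dg act_inf dinf \<theta> x (grad (lyap l idx L f) \<theta>) = 4 * real L *
     (\<Sum>i = 1..l L. (net l idx \<theta> act_inf L x i - f x i) * (net l idx \<theta> act_inf L x i - f (\<lambda>_. 0) i))"
proof -
  let ?gV = "grad (lyap l idx L f) \<theta>"
  let ?tg = "tg l (wgt l idx \<theta>) (\<lambda>k. net l idx \<theta> act_inf k x) act_inf dinf x"
  define B1 where "B1 = (\<lambda>k i. real k * bias l idx \<theta> k i)"
  define B2 where "B2 = (\<lambda>k i. if k = L then f (\<lambda>_. 0) i else 0)"
  define W2 where "W2 = (\<lambda>(k::nat) (i::nat) (j::nat). (0::real))"
  have LS: "L = Suc (L - 1)" using L_pos by simp
  have c: "?tg (bias l idx ?gV) (wgt l idx ?gV) L = ?tg (\<lambda>k i. 2 * B1 k i + (- 2 * real L) * B2 k i)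
      (\<lambda>k i j. 2 * wgt l idx \<theta> k i j + (- 2 * real L) * W2 k i j) L"
  proof (rule tg_cong, intro ballI conjI)
    fix k' i assume k': "k' \<in> {1..L}" and i: "i \<in> {1..l k'}"
    show "bias l idx ?gV k' i = 2 * B1 k' i + (- 2 * real L) * B2 k' i"
      using grad_lyap_bias[OF inj_idx, of k' i f \<theta>] k' i unfolding vb_def B1_def B2_def by auto
    show "wgt l idx ?gV k' i j = 2 * wgt l idx \<theta> k' i j + (- 2 * real L) * W2 k' i j" if j: "j \<in> {1..l (k' - 1)}" for j
      using grad_lyap_wgt[OF inj_idx, of k' i j f \<theta>] k' i j unfolding vw_def W2_def by auto
  qed
  have T: "?tg (bias l idx ?gV) (wgt l idx ?gV) L i = 2 * real L * (net l idx \<theta> act_inf L x i - f (\<lambda>_. 0) i)"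
    if i: "i \<in> {1..l L}" for i
  proof -
    have "?tg (bias l idx ?gV) (wgt l idx ?gV) L i = 2 * ?tg B1 (wgt l idx \<theta>) L i + (- 2 * real L) * ?tg B2 W2 L i"
      unfolding c by (rule tg_lin)
    also have "?tg B1 (wgt l idx \<theta>) L i = real L * net l idx \<theta> act_inf L x i"
      unfolding B1_def using tg_euler[of l idx \<theta> x "L - 1" i] LS by simp
    also have "?tg B2 W2 L i = f (\<lambda>_. 0) i"
      unfolding B2_def W2_def using tg_ef[of "L - 1" L l _ _ act_inf dinf x "\<lambda>i. f (\<lambda>_. 0) i" i] LS i by simp
    finally show ?thesis by (simp add: algebra_simps)
  qed
  have "Dg act_inf dinf \<theta> x ?gV = (\<Sum>i = 1..l L. 4 * real L *
     ((net l idx \<theta> act_inf L x i - f x i) * (net l idx \<theta> act_inf L x i - f (\<lambda>_. 0) i)))"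
    unfolding Dg_def by (rule sum.cong[OF refl]) (simp add: T algebra_simps)
  then show ?thesis by (simp add: sum_distrib_left)
qed

lemma final:
  "inner (grad (lyap l idx L f) \<theta>) (\<Sum>b\<in>Basis. PhiI \<theta> b *\<^sub>R b) = 4 * real L *
    (\<integral>x. (\<Sum>i = 1..l L. (net l idx \<theta> act_inf L x i - f x i) * (net l idx \<theta> act_inf L x i - f (\<lambda>_. 0) i)) \<partial>\<mu>)"
proof -
  have "inner (grad (lyap l idx L f) \<theta>) (\<Sum>b\<in>Basis. PhiI \<theta> b *\<^sub>R b) = (\<Sum>b\<in>Basis. PhiI \<theta> b *\<^sub>R b) \<bullet> grad (lyap l idx L f) \<theta>"
    by (rule inner_commute)
  also have "\<dots> = PhiI \<theta> (grad (lyap l idx L f) \<theta>)" by (rule sum_basis_inner[OF PhiI_linear])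
  also have "\<dots> = (\<integral>x. 4 * real L * (\<Sum>i = 1..l L. (net l idx \<theta> act_inf L x i - f x i) * (net l idx \<theta> act_inf L x i - f (\<lambda>_. 0) i)) \<partial>\<mu>)"
    unfolding PhiI_def Dg_gradV ..
  also have "\<dots> = 4 * real L * (\<integral>x. (\<Sum>i = 1..l L. (net l idx \<theta> act_inf L x i - f x i) * (net l idx \<theta> act_inf L x i - f (\<lambda>_. 0) i)) \<partial>\<mu>)"
    by (rule integral_mult_right_zero)
  finally show ?thesis .
qed

end

theorem proposition3p2:
  fixes L dd :: nat and l :: "nat \<Rightarrow> nat" and a b AA BB :: real
    and idx :: "nat \<Rightarrow> 'd::finite"
    and R :: "real \<Rightarrow> real \<Rightarrow> real"
    and \<mu> :: "(nat \<Rightarrow> real) measure"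
    and f :: "(nat \<Rightarrow> real) \<Rightarrow> (nat \<Rightarrow> real)"
    and G :: "real^'d \<Rightarrow> real^'d"
    and \<theta> :: "real^'d"
  assumes L_pos: "L \<ge> 1"
    and l_pos: "\<forall>k. l k \<ge> 1"
    and ab: "a < b"
    and AB: "0 < AA" "AA < BB"
    and dd_def: "dd = (\<Sum>k = 1..L. l k * (l (k - 1) + 1))"
    and idx_bij: "bij_betw idx {1..dd} (UNIV :: 'd set)"
    and R_C1: "\<forall>r \<ge> 1. (\<forall>x. R r differentiable (at x)) \<and> continuous_on UNIV (deriv (R r))"
    and R_zero: "\<forall>r \<ge> 1. \<forall>x. x \<le> AA / r \<longrightarrow> R r x = 0"
    and R_bounds: "\<forall>r \<ge> 1. \<forall>y. 0 \<le> R r y \<and> R r y \<le> max y 0"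
    and R_id: "\<forall>r \<ge> 1. \<forall>z. z \<ge> BB / r \<longrightarrow> R r z = z"
    and R_deriv_bdd: "\<exists>C. \<forall>r \<ge> 1. \<forall>x. \<bar>deriv (R r) x\<bar> \<le> C"
    and mu_sets: "sets \<mu> = sets (Pi\<^sub>M {1..l 0} (\<lambda>_. restrict_space lborel {a..b}))"
    and mu_finite: "emeasure \<mu> (space \<mu>) < \<infinity>"
    and f_meas: "\<forall>i. (\<lambda>x. f x i) \<in> borel_measurable \<mu>"
    and integrable_fin: "\<forall>r \<ge> 1. \<forall>\<phi>. integrable \<mu>
        (\<lambda>x. \<Sum>i = 1..l L. (net l idx \<phi> (act_fin R r) L x i - f x i)\<^sup>2)"
    and integrable_inf: "\<forall>\<phi>. integrable \<mu>
        (\<lambda>x. \<Sum>i = 1..l L. (net l idx \<phi> act_inf L x i - f x i)\<^sup>2)"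
    and G_def: "\<forall>\<phi>. (\<exists>g. ((\<lambda>r. grad (risk l idx L (act_fin R r) \<mu> f) \<phi>) \<longlongrightarrow> g) at_top)
        \<longrightarrow> ((\<lambda>r. grad (risk l idx L (act_fin R r) \<mu> f) \<phi>) \<longlongrightarrow> G \<phi>) at_top"
  shows "inner (grad (lyap l idx L f) \<theta>) (G \<theta>) =
    4 * real L * (\<integral>x. (\<Sum>i = 1..l L.
        (net l idx \<theta> act_inf L x i - f x i) * (net l idx \<theta> act_inf L x i - f (\<lambda>_. 0) i)) \<partial>\<mu>)"
proof -
  interpret S: setting L dd l a b AA BB idx R \<mu> f
    by unfold_locales (fact L_pos l_pos ab AB dd_def idx_bij R_C1 R_zero R_bounds R_id R_deriv_bdd
        mu_sets mu_finite f_meas integrable_fin integrable_inf)+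
  have lim: "((\<lambda>r. grad (risk l idx L (act_fin R r) \<mu> f) \<theta>) \<longlongrightarrow> (\<Sum>b\<in>Basis. S.PhiI \<theta> b *\<^sub>R b)) at_top"
    by (rule S.grad_risk_conv)
  then have lim2: "((\<lambda>r. grad (risk l idx L (act_fin R r) \<mu> f) \<theta>) \<longlongrightarrow> G \<theta>) at_top"
    using G_def by blast
  have "G \<theta> = (\<Sum>b\<in>Basis. S.PhiI \<theta> b *\<^sub>R b)"
    by (rule tendsto_unique[OF _ lim2 lim]) simp
  then show ?thesis using S.final[of \<theta>] by simp
qed

end
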